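(* For every $n\ge1$, $m_{\mathsf{faithful}}\big(\mathrm{Aff}(\mathcal{O}/\mathfrak{p}^n)\big)=q^n-q^{n-1}$.
   Context: For a finite group $G$, $m_{\mathsf{faithful}}(G)$ denotes the smallest dimension of a faithful complex representation of $G$. $F$ is a non-Archimedean local field with ring of integers $\mathcal{O}$, maximal ideal $\mathfrak{p}$, and residue field of size $q$. For a commutative ring $R$, $\mathrm{Aff}(R)=R\rtimes R^\times$, where the unit group $R^\times$ acts on the additive group $(R,+)$ by multiplication. *)

theory Defs
  imports "HOL-Algebra.QuotRing" "Jordan_Normal_Form.Matrix"
begin

text \<open>A normalized discrete valuation v on a field (value of 0 is irrelevant; 0 is treated
as having valuation +infinity everywhere below).\<close>

definition val_ring :: "('a::field \<Rightarrow> int) \<Rightarrow> 'a ring" where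
  "val_ring v = \<lparr>carrier = {x. x = 0 \<or> 0 \<le> v x}, monoid.mult = (*), one = 1, ring.zero = 0, ring.add = (+)\<rparr>"

definition val_ideal :: "('a::field \<Rightarrow> int) \<Rightarrow> nat \<Rightarrow> 'a set" where
  "val_ideal v n = {x. x = 0 \<or> int n \<le> v x}"

definition residue_card :: "('a::field \<Rightarrow> int) \<Rightarrow> nat" where
  "residue_card v = card (carrier (val_ring v Quot val_ideal v 1))"

definition nonarch_local_field :: "('a::field \<Rightarrow> int) \<Rightarrow> bool" where
  "nonarch_local_field v \<longleftrightarrow>
     (\<forall>x y. x \<noteq> 0 \<longrightarrow> y \<noteq> 0 \<longrightarrow> v (x * y) = v x + v y) \<and>
     (\<forall>x y. x \<noteq> 0 \<longrightarrow> y \<noteq> 0 \<longrightarrow> x + y \<noteq> 0 \<longrightarrow> min (v x) (v y) \<le> v (x + y)) \<and>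
     (\<forall>k. \<exists>x. x \<noteq> 0 \<and> v x = k) \<and>
     (\<forall>s :: nat \<Rightarrow> 'a.
        (\<forall>N. \<exists>M. \<forall>m\<ge>M. \<forall>k\<ge>M. s m - s k \<in> val_ideal v N) \<longrightarrow>
        (\<exists>L. \<forall>N. \<exists>M. \<forall>m\<ge>M. s m - L \<in> val_ideal v N)) \<and>
     finite (carrier (val_ring v Quot val_ideal v 1))"

definition Aff :: "('r, 'm) ring_scheme \<Rightarrow> ('r \<times> 'r) monoid" where
  "Aff R = \<lparr>carrier = carrier R \<times> Units R,
            monoid.mult = (\<lambda>(b, u) (b', u'). (b \<oplus>\<^bsub>R\<^esub> (u \<otimes>\<^bsub>R\<^esub> b'), u \<otimes>\<^bsub>R\<^esub> u')),
            monoid.one = (\<zero>\<^bsub>R\<^esub>, \<one>\<^bsub>R\<^esub>)\<rparr>"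

definition faithful_rep :: "('g, 'b) monoid_scheme \<Rightarrow> nat \<Rightarrow> ('g \<Rightarrow> complex mat) \<Rightarrow> bool" where
  "faithful_rep G d \<rho> \<longleftrightarrow>
     (\<forall>x\<in>carrier G. \<rho> x \<in> carrier_mat d d) \<and>
     (\<forall>x\<in>carrier G. \<forall>y\<in>carrier G. \<rho> (x \<otimes>\<^bsub>G\<^esub> y) = \<rho> x * \<rho> y) \<and>
     \<rho> \<one>\<^bsub>G\<^esub> = 1\<^sub>m d \<and>
     inj_on \<rho> (carrier G)"

definition m_faithful :: "('g, 'b) monoid_scheme \<Rightarrow> nat" where
  "m_faithful G = (LEAST d. \<exists>\<rho>. faithful_rep G d \<rho>)"

end

theory Submission
  imports Defs "Jordan_Normal_Form.Determinant"
begin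

locale vf =
  fixes v :: "'a::field \<Rightarrow> int"
  assumes nal: "nonarch_local_field v"
begin

lemma vmult: "x \<noteq> 0 \<Longrightarrow> y \<noteq> 0 \<Longrightarrow> v (x * y) = v x + v y"
  using nal unfolding nonarch_local_field_def by blast

lemma vadd: "x \<noteq> 0 \<Longrightarrow> y \<noteq> 0 \<Longrightarrow> x + y \<noteq> 0 \<Longrightarrow> min (v x) (v y) \<le> v (x + y)"
  using nal unfolding nonarch_local_field_def by blast

lemma vsurj: "\<exists>x. x \<noteq> 0 \<and> v x = k"
  using nal unfolding nonarch_local_field_def by blast

lemma fin1: "finite (carrier (val_ring v Quot val_ideal v 1))"
  using nal unfolding nonarch_local_field_def by blast

lemma v1[simp]: "v 1 = 0"
  using vmult[of 1 1] by simp

lemma vm1[simp]: "v (-1) = 0"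
  using vmult[of "-1" "-1"] by simp

lemma vneg[simp]: "v (- x) = v x"
proof (cases "x = 0")
  case False
  then show ?thesis using vmult[of "-1" x] by simp
qed simp

lemma vinv: "x \<noteq> 0 \<Longrightarrow> v (inverse x) = - v x"
  using vmult[of x "inverse x"] by simp

lemma vdiv: "x \<noteq> 0 \<Longrightarrow> y \<noteq> 0 \<Longrightarrow> v (x / y) = v x - v y"
  by (simp add: divide_inverse vmult vinv)

lemma vdiff: "x \<noteq> 0 \<Longrightarrow> y \<noteq> 0 \<Longrightarrow> x - y \<noteq> 0 \<Longrightarrow> min (v x) (v y) \<le> v (x - y)"
  using vadd[of x "-y"] by simp

lemma mem_I: "x \<in> val_ideal v k \<longleftrightarrow> x = 0 \<or> int k \<le> v x"
  by (simp add: val_ideal_def)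

lemma I_zero[simp]: "0 \<in> val_ideal v k" by (simp add: mem_I)

lemma I_add: "x \<in> val_ideal v k \<Longrightarrow> y \<in> val_ideal v k \<Longrightarrow> x + y \<in> val_ideal v k"
  unfolding mem_I using vadd[of x y] by (cases "x = 0"; cases "y = 0"; cases "x + y = 0") auto

lemma I_neg: "x \<in> val_ideal v k \<Longrightarrow> - x \<in> val_ideal v k"
  unfolding mem_I by auto

lemma I_diff: "x \<in> val_ideal v k \<Longrightarrow> y \<in> val_ideal v k \<Longrightarrow> x - y \<in> val_ideal v k"
  using I_add[of x k "-y"] I_neg[of y k] by simp

lemma I_mult: "x \<in> val_ideal v a \<Longrightarrow> y \<in> val_ideal v b \<Longrightarrow> x * y \<in> val_ideal v (a + b)"
  unfolding mem_I using vmult[of x y] by (cases "x = 0"; cases "y = 0") auto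

lemma I_mono: "a \<le> b \<Longrightarrow> x \<in> val_ideal v b \<Longrightarrow> x \<in> val_ideal v a"
  unfolding mem_I by auto

lemma one_I0[simp]: "1 \<in> val_ideal v 0" by (simp add: mem_I)

lemma carrier_val_ring: "carrier (val_ring v) = val_ideal v 0"
  by (auto simp: val_ring_def val_ideal_def)

lemma val_ring_ops[simp]: "(\<otimes>\<^bsub>val_ring v\<^esub>) = (*)" "(\<oplus>\<^bsub>val_ring v\<^esub>) = (+)"
  "\<one>\<^bsub>val_ring v\<^esub> = 1" "\<zero>\<^bsub>val_ring v\<^esub> = 0"
  by (auto simp: val_ring_def)

lemma I_mult0: "x \<in> val_ideal v 0 \<Longrightarrow> y \<in> val_ideal v b \<Longrightarrow> x * y \<in> val_ideal v b"
  using I_mult[of x 0 y b] by simp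

lemma I_mult0': "y \<in> val_ideal v b \<Longrightarrow> x \<in> val_ideal v 0 \<Longrightarrow> y * x \<in> val_ideal v b"
  using I_mult0[of x y b] by (simp add: mult.commute)

lemma cring_O: "cring (val_ring v)"
proof (rule cringI)
  show "abelian_group (val_ring v)"
    by (rule abelian_groupI) (auto simp: carrier_val_ring I_add intro!: bexI[of _ "- _"] I_neg)
  show "comm_monoid (val_ring v)"
    by (rule comm_monoidI) (auto simp: carrier_val_ring dest: I_mult0)
qed (auto simp: distrib_right)

lemma a_inv_O: "x \<in> val_ideal v 0 \<Longrightarrow> \<ominus>\<^bsub>val_ring v\<^esub> x = - x"
proof -
  interpret cring "val_ring v" by (rule cring_O)
  assume x: "x \<in> val_ideal v 0"
  show ?thesis
    by (rule minus_equality) (use x in \<open>auto simp: carrier_val_ring I_neg\<close>)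
qed

lemma ideal_I: "ideal (val_ideal v k) (val_ring v)"
proof -
  interpret cring "val_ring v" by (rule cring_O)
  have sub: "val_ideal v k \<subseteq> val_ideal v 0" using I_mono[of 0 k] by auto
  show ?thesis
  proof (rule idealI)
    show "ring (val_ring v)" by unfold_locales
    show "subgroup (val_ideal v k) (add_monoid (val_ring v))"
    proof (rule add.subgroupI)
      show "val_ideal v k \<noteq> {}" using I_zero[of k] by blast
    qed (use sub in \<open>auto simp: carrier_val_ring a_inv_O I_neg I_add\<close>)
  qed (use sub in \<open>auto simp: carrier_val_ring intro: I_mult0 I_mult0'\<close>)
qed


definition cls :: "nat \<Rightarrow> 'a \<Rightarrow> 'a set" where
  "cls k x = val_ideal v k +>\<^bsub>val_ring v\<^esub> x"

lemma cls_alt: "cls k x = (\<lambda>h. h + x) ` val_ideal v k"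
  unfolding cls_def a_r_coset_def' by auto

lemma cls_self: "x \<in> cls k x"
  unfolding cls_alt by (rule image_eqI[of _ _ 0]) auto

lemma cls_eq: "cls k x = cls k y \<longleftrightarrow> x - y \<in> val_ideal v k"
proof
  assume "cls k x = cls k y"
  then have "x \<in> cls k y" using cls_self by metis
  then show "x - y \<in> val_ideal v k" unfolding cls_alt by auto
next
  assume h: "x - y \<in> val_ideal v k"
  show "cls k x = cls k y" unfolding cls_alt
  proof (intro equalityI subsetI)
    fix z assume "z \<in> (\<lambda>h. h + x) ` val_ideal v k"
    then obtain h where "h \<in> val_ideal v k" "z = h + x" by auto
    then show "z \<in> (\<lambda>h. h + y) ` val_ideal v k"
      using I_add[OF \<open>h \<in> _\<close> h] by (intro image_eqI[of _ _ "h + (x - y)"]) auto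
  next
    fix z assume "z \<in> (\<lambda>h. h + y) ` val_ideal v k"
    then obtain h where "h \<in> val_ideal v k" "z = h + y" by auto
    then show "z \<in> (\<lambda>h. h + x) ` val_ideal v k"
      using I_diff[OF \<open>h \<in> _\<close> h] by (intro image_eqI[of _ _ "h - (x - y)"]) auto
  qed
qed

lemma carrier_Quot: "carrier (val_ring v Quot val_ideal v k) = cls k ` val_ideal v 0"
  unfolding FactRing_def A_RCOSETS_def' cls_def by (auto simp: carrier_val_ring)

lemma Quot_ops:
  assumes "x \<in> val_ideal v 0" "y \<in> val_ideal v 0"
  shows "cls k x \<oplus>\<^bsub>val_ring v Quot val_ideal v k\<^esub> cls k y = cls k (x + y)"
    "cls k x \<otimes>\<^bsub>val_ring v Quot val_ideal v k\<^esub> cls k y = cls k (x * y)"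
proof -
  have h: "(+>\<^bsub>val_ring v\<^esub>) (val_ideal v k) \<in> Ring.ring_hom (val_ring v) (val_ring v Quot val_ideal v k)"
    by (rule ideal.rcos_ring_hom[OF ideal_I])
  show "cls k x \<oplus>\<^bsub>val_ring v Quot val_ideal v k\<^esub> cls k y = cls k (x + y)"
    using ring_hom_add[OF h, of x y] assms by (simp add: cls_def carrier_val_ring)
  show "cls k x \<otimes>\<^bsub>val_ring v Quot val_ideal v k\<^esub> cls k y = cls k (x * y)"
    using ring_hom_mult[OF h, of x y] assms by (simp add: cls_def carrier_val_ring)
qed

lemma Quot_one_zero:
  "\<one>\<^bsub>val_ring v Quot val_ideal v k\<^esub> = cls k 1"
  "\<zero>\<^bsub>val_ring v Quot val_ideal v k\<^esub> = cls k 0"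
proof -
  show "\<one>\<^bsub>val_ring v Quot val_ideal v k\<^esub> = cls k 1"
    by (simp add: cls_def FactRing_def)
  show "\<zero>\<^bsub>val_ring v Quot val_ideal v k\<^esub> = cls k 0"
    using cls_eq[of k 0] unfolding FactRing_def cls_alt by (auto simp: image_iff)
qed

lemma cring_Quot: "cring (val_ring v Quot val_ideal v k)"
  by (rule ideal.quotient_is_cring[OF ideal_I cring_O])


definition upi where "upi = (SOME x. x \<noteq> 0 \<and> v x = 1)"

lemma upi: "upi \<noteq> 0" "v upi = 1"
  using someI_ex[OF vsurj[of 1]] unfolding upi_def by auto

lemma upi_pow: "upi ^ k \<noteq> 0" "v (upi ^ k) = int k"
proof -
  show "upi ^ k \<noteq> 0" using upi by simp
  show "v (upi ^ k) = int k"
    by (induction k) (auto simp: vmult upi)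
qed

lemma I_shift: "upi ^ k * y \<in> val_ideal v (k + j) \<longleftrightarrow> y \<in> val_ideal v j"
  unfolding mem_I using upi_pow[of k] by (cases "y = 0") (auto simp: vmult)

lemma I_div: "x \<in> val_ideal v (k + j) \<Longrightarrow> x / upi ^ k \<in> val_ideal v j"
  using I_shift[of k "x / upi ^ k" j] upi_pow[of k] by (simp add: upi(1))

lemma I_sub: "k \<le> j \<Longrightarrow> x \<in> val_ideal v j \<Longrightarrow> x \<in> val_ideal v k"
  by (rule I_mono)

abbreviation Q where "Q k \<equiv> cls k ` val_ideal v 0"

definition rep where "rep k C = (SOME x. x \<in> val_ideal v 0 \<and> cls k x = C)"

lemma rep: "C \<in> Q k \<Longrightarrow> rep k C \<in> val_ideal v 0 \<and> cls k (rep k C) = C"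
  unfolding rep_def by (rule someI_ex) auto

lemma cls_rep_eq: "x \<in> val_ideal v 0 \<Longrightarrow> rep k (cls k x) - x \<in> val_ideal v k"
  using rep[of "cls k x" k] cls_eq by auto

lemma count_step: "bij_betw (\<lambda>(C, D). cls (Suc k) (rep k C + upi ^ k * rep 1 D)) (Q k \<times> Q 1) (Q (Suc k))"
proof (rule bij_betwI')
  fix p p' assume p: "p \<in> Q k \<times> Q 1" and p': "p' \<in> Q k \<times> Q 1"
  obtain C D where pcd: "p = (C, D)" by force
  obtain C' D' where pcd': "p' = (C', D')" by force
  define x where "x = rep k C"
  define y where "y = rep 1 D"
  define x' where "x' = rep k C'"
  define y' where "y' = rep 1 D'"
  have r: "x \<in> val_ideal v 0" "cls k x = C" "y \<in> val_ideal v 0" "cls 1 y = D"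
     "x' \<in> val_ideal v 0" "cls k x' = C'" "y' \<in> val_ideal v 0" "cls 1 y' = D'"
    using p p' rep unfolding pcd pcd' x_def y_def x'_def y'_def by auto
  show "((\<lambda>(C, D). cls (Suc k) (rep k C + upi ^ k * rep 1 D)) p =
         (\<lambda>(C, D). cls (Suc k) (rep k C + upi ^ k * rep 1 D)) p') = (p = p')"
  proof
    assume "(\<lambda>(C, D). cls (Suc k) (rep k C + upi ^ k * rep 1 D)) p =
         (\<lambda>(C, D). cls (Suc k) (rep k C + upi ^ k * rep 1 D)) p'"
    then have e: "(x + upi ^ k * y) - (x' + upi ^ k * y') \<in> val_ideal v (Suc k)"
      unfolding pcd pcd' x_def y_def x'_def y'_def by (simp add: cls_eq)
    have e1: "upi ^ k * (y - y') \<in> val_ideal v k"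
      using I_shift[of k "y - y'" 0] I_diff[OF r(3) r(7)] by simp
    have "x - x' = ((x + upi ^ k * y) - (x' + upi ^ k * y')) - upi ^ k * (y - y')"
      by (simp add: algebra_simps)
    also have "\<dots> \<in> val_ideal v k"
      by (rule I_diff[OF I_sub[OF _ e] e1]) simp
    finally have "C = C'" using r cls_eq by metis
    then have "x = x'" unfolding x_def x'_def by simp
    then have "upi ^ k * (y - y') \<in> val_ideal v (k + 1)" using e by (simp add: algebra_simps)
    then have "y - y' \<in> val_ideal v 1" using I_shift by blast
    then have "D = D'" using r cls_eq by metis
    then show "p = p'" using \<open>C = C'\<close> pcd pcd' by simp
  qed simp
next
  fix p assume p: "p \<in> Q k \<times> Q 1"
  obtain C D where pcd: "p = (C, D)" by force
  have r: "rep k C \<in> val_ideal v 0" "rep 1 D \<in> val_ideal v 0" using p rep unfolding pcd by auto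
  have "upi ^ k \<in> val_ideal v 0" by (simp add: mem_I upi_pow)
  then have "upi ^ k * rep 1 D \<in> val_ideal v 0" using I_mult0 r(2) by blast
  then have "rep k C + upi ^ k * rep 1 D \<in> val_ideal v 0" using I_add r(1) by blast
  then show "(\<lambda>(C, D). cls (Suc k) (rep k C + upi ^ k * rep 1 D)) p \<in> Q (Suc k)"
    unfolding pcd by simp
next
  fix E assume "E \<in> Q (Suc k)"
  then obtain z where z: "z \<in> val_ideal v 0" "E = cls (Suc k) z" by auto
  define C where "C = cls k z"
  define x where "x = rep k C"
  have x1: "x \<in> val_ideal v 0" using rep[of C k] z(1) unfolding C_def x_def by blast
  have "- (x - z) \<in> val_ideal v k" using cls_rep_eq[OF z(1), of k] I_neg unfolding C_def x_def by blast
  then have x: "x \<in> val_ideal v 0" "z - x \<in> val_ideal v k" using x1 by simp_all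
  define t where "t = (z - x) / upi ^ k"
  have t: "t \<in> val_ideal v 0" using I_div[of "z - x" k 0] x by (simp add: t_def)
  define D where "D = cls 1 t"
  define y where "y = rep 1 D"
  have y: "t - y \<in> val_ideal v 1"
    using cls_rep_eq[OF t, of 1] I_neg unfolding D_def y_def by force
  have "z - (x + upi ^ k * y) = upi ^ k * (t - y)"
    using upi_pow(1)[of k] by (simp add: t_def field_simps)
  also have "\<dots> \<in> val_ideal v (k + 1)" using I_shift y by blast
  finally have "E = cls (Suc k) (x + upi ^ k * y)" using z cls_eq by simp
  moreover have "(C, D) \<in> Q k \<times> Q 1" using z t unfolding C_def D_def by auto
  ultimately show "\<exists>p\<in>Q k \<times> Q 1. E = (\<lambda>(C, D). cls (Suc k) (rep k C + upi ^ k * rep 1 D)) p"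
    unfolding x_def y_def by force
qed

lemma Q0: "Q 0 = {val_ideal v 0}"
proof -
  have "cls 0 x = cls 0 0" if "x \<in> val_ideal v 0" for x using that by (simp add: cls_eq)
  moreover have "cls 0 0 = val_ideal v 0" by (simp add: cls_alt)
  ultimately have "cls 0 ` val_ideal v 0 = (\<lambda>_. val_ideal v 0) ` val_ideal v 0"
    by (intro image_cong) auto
  moreover have "val_ideal v 0 \<noteq> {}" using I_zero[of 0] by blast
  ultimately show ?thesis by (simp add: image_constant_conv)
qed

lemma finQ1: "finite (Q 1)" using fin1 by (simp add: carrier_Quot)

lemma cardQ: "finite (Q k) \<and> card (Q k) = card (Q 1) ^ k"
proof (induction k)
  case 0 then show ?case by (simp add: Q0)
next
  case (Suc k)
  have "finite (Q k \<times> Q 1)" using Suc finQ1 by simp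
  then have f: "finite (Q (Suc k))" using bij_betw_finite[OF count_step[of k]] by simp
  have "card (Q (Suc k)) = card (Q k \<times> Q 1)" using bij_betw_same_card[OF count_step[of k]] by simp
  also have "\<dots> = card (Q 1) ^ Suc k" using Suc by (simp add: card_cartesian_product)
  finally show ?case using f by simp
qed

lemma shift_bij: "bij_betw (\<lambda>C. cls (Suc k) (upi * rep k C)) (Q k) (cls (Suc k) ` val_ideal v 1)"
proof (rule bij_betwI')
  fix C C' assume C: "C \<in> Q k" and C': "C' \<in> Q k"
  show "(cls (Suc k) (upi * rep k C) = cls (Suc k) (upi * rep k C')) = (C = C')"
  proof
    assume "cls (Suc k) (upi * rep k C) = cls (Suc k) (upi * rep k C')"
    then have "upi ^ 1 * (rep k C - rep k C') \<in> val_ideal v (1 + k)" by (simp add: cls_eq algebra_simps)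
    then have "rep k C - rep k C' \<in> val_ideal v k" using I_shift by blast
    then show "C = C'" using rep C C' cls_eq by metis
  qed simp
next
  fix C assume "C \<in> Q k"
  then have "upi ^ 1 * rep k C \<in> val_ideal v (1 + 0)" using rep I_shift by blast
  then show "cls (Suc k) (upi * rep k C) \<in> cls (Suc k) ` val_ideal v 1" by simp
next
  fix E assume "E \<in> cls (Suc k) ` val_ideal v 1"
  then obtain z where z: "z \<in> val_ideal v 1" "E = cls (Suc k) z" by auto
  define t where "t = z / upi ^ 1"
  have t: "t \<in> val_ideal v 0" using I_div[of z 1 0] z by (simp add: t_def)
  have y: "t - rep k (cls k t) \<in> val_ideal v k"
    using cls_rep_eq[OF t, of k] I_neg by force
  have "z - upi * rep k (cls k t) = upi ^ 1 * (t - rep k (cls k t))"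
    using upi by (simp add: t_def algebra_simps)
  also have "\<dots> \<in> val_ideal v (1 + k)" using I_shift y by blast
  finally have "E = cls (Suc k) (upi * rep k (cls k t))" using z cls_eq by simp
  then show "\<exists>C\<in>Q k. E = cls (Suc k) (upi * rep k C)" using t by blast
qed


end

definition mlc :: "nat \<Rightarrow> 't set \<Rightarrow> ('t \<Rightarrow> complex) \<Rightarrow> ('t \<Rightarrow> complex mat) \<Rightarrow> complex mat" where
  "mlc d I c F = mat d d (\<lambda>(i, j). \<Sum>t\<in>I. c t * F t $$ (i, j))"

lemma mlc_carrier[simp]: "mlc d I c F \<in> carrier_mat d d"
  by (simp add: mlc_def)

lemma mlc_dims[simp]: "dim_row (mlc d I c F) = d" "dim_col (mlc d I c F) = d"
  by (simp_all add: mlc_def)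

lemma mlc_index: "i < d \<Longrightarrow> j < d \<Longrightarrow> mlc d I c F $$ (i, j) = (\<Sum>t\<in>I. c t * F t $$ (i, j))"
  by (simp add: mlc_def)

lemma mult_entry: "A \<in> carrier_mat n d \<Longrightarrow> B \<in> carrier_mat d m \<Longrightarrow> i < n \<Longrightarrow> j < m \<Longrightarrow>
  (A * B) $$ (i, j) = (\<Sum>l<d. A $$ (i, l) * B $$ (l, j))"
  by (simp add: scalar_prod_def lessThan_atLeast0)

lemma mv_entry: "A \<in> carrier_mat n d \<Longrightarrow> w \<in> carrier_vec d \<Longrightarrow> i < n \<Longrightarrow>
  (A *\<^sub>v w) $ i = (\<Sum>l<d. A $$ (i, l) * w $ l)"
  by (simp add: scalar_prod_def lessThan_atLeast0)

lemma mlc_left: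
  assumes A: "A \<in> carrier_mat d d" and F: "\<And>t. t \<in> I \<Longrightarrow> F t \<in> carrier_mat d d"
  shows "A * mlc d I c F = mlc d I c (\<lambda>t. A * F t)"
proof (rule eq_matI)
  fix i j assume ij: "i < dim_row (mlc d I c (\<lambda>t. A * F t))" "j < dim_col (mlc d I c (\<lambda>t. A * F t))"
  then have i: "i < d" and j: "j < d" by auto
  have "(A * mlc d I c F) $$ (i, j) = (\<Sum>l<d. A $$ (i, l) * (\<Sum>t\<in>I. c t * F t $$ (l, j)))"
    using A i j by (simp add: scalar_prod_def mlc_index lessThan_atLeast0)
  also have "\<dots> = (\<Sum>t\<in>I. c t * (\<Sum>l<d. A $$ (i, l) * F t $$ (l, j)))"
    by (simp add: sum_distrib_left sum_distrib_right sum.swap[of _ I] mult_ac)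
  also have "\<dots> = (\<Sum>t\<in>I. c t * (A * F t) $$ (i, j))"
    by (rule sum.cong[OF refl]) (simp add: mult_entry[OF A F] i j)
  also have "\<dots> = mlc d I c (\<lambda>t. A * F t) $$ (i, j)" using i j by (simp add: mlc_index)
  finally show "(A * mlc d I c F) $$ (i, j) = mlc d I c (\<lambda>t. A * F t) $$ (i, j)" .
qed (use A in auto)

lemma mlc_right:
  assumes A: "A \<in> carrier_mat d d" and F: "\<And>t. t \<in> I \<Longrightarrow> F t \<in> carrier_mat d d"
  shows "mlc d I c F * A = mlc d I c (\<lambda>t. F t * A)"
proof (rule eq_matI)
  fix i j assume ij: "i < dim_row (mlc d I c (\<lambda>t. F t * A))" "j < dim_col (mlc d I c (\<lambda>t. F t * A))"
  then have i: "i < d" and j: "j < d" by auto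
  have "(mlc d I c F * A) $$ (i, j) = (\<Sum>l<d. (\<Sum>t\<in>I. c t * F t $$ (i, l)) * A $$ (l, j))"
    using A i j by (simp add: scalar_prod_def mlc_index lessThan_atLeast0)
  also have "\<dots> = (\<Sum>t\<in>I. c t * (\<Sum>l<d. F t $$ (i, l) * A $$ (l, j)))"
    by (simp add: sum_distrib_left sum_distrib_right sum.swap[of _ I] mult_ac)
  also have "\<dots> = (\<Sum>t\<in>I. c t * (F t * A) $$ (i, j))"
    by (rule sum.cong[OF refl]) (simp add: mult_entry[OF F A] i j)
  also have "\<dots> = mlc d I c (\<lambda>t. F t * A) $$ (i, j)" using i j by (simp add: mlc_index)
  finally show "(mlc d I c F * A) $$ (i, j) = mlc d I c (\<lambda>t. F t * A) $$ (i, j)" .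
qed (use A in auto)

lemma mlc_vec:
  assumes w: "w \<in> carrier_vec d" and F: "\<And>t. t \<in> I \<Longrightarrow> F t \<in> carrier_mat d d"
  shows "mlc d I c F *\<^sub>v w = vec d (\<lambda>i. \<Sum>t\<in>I. c t * (F t *\<^sub>v w) $ i)"
proof (rule eq_vecI)
  fix i assume "i < dim_vec (vec d (\<lambda>i. \<Sum>t\<in>I. c t * (F t *\<^sub>v w) $ i))"
  then have i: "i < d" by simp
  have "(mlc d I c F *\<^sub>v w) $ i = (\<Sum>l<d. (\<Sum>t\<in>I. c t * F t $$ (i, l)) * w $ l)"
    using w i by (simp add: scalar_prod_def mlc_index lessThan_atLeast0)
  also have "\<dots> = (\<Sum>t\<in>I. c t * (\<Sum>l<d. F t $$ (i, l) * w $ l))"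
    by (simp add: sum_distrib_left sum_distrib_right sum.swap[of _ I] mult_ac)
  also have "\<dots> = (\<Sum>t\<in>I. c t * (F t *\<^sub>v w) $ i)"
    by (rule sum.cong[OF refl]) (simp add: mv_entry[OF F w] i)
  finally show "(mlc d I c F *\<^sub>v w) $ i = vec d (\<lambda>i. \<Sum>t\<in>I. c t * (F t *\<^sub>v w) $ i) $ i"
    using i by simp
qed (use w in auto)

lemma rank_bound:
  fixes P Q :: "complex mat"
  assumes P: "P \<in> carrier_mat k d" and Q: "Q \<in> carrier_mat d k" and PQ: "P * Q = 1\<^sub>m k"
  shows "k \<le> d"
proof (rule ccontr)
  assume "\<not> k \<le> d"
  then have dk: "d < k" by simp
  define P' where "P' = mat k k (\<lambda>(i, j). if j < d then P $$ (i, j) else 0)"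
  define Q' where "Q' = mat k k (\<lambda>(i, j). if i < d then Q $$ (i, j) else 0)"
  have P'c: "P' \<in> carrier_mat k k" and Q'c: "Q' \<in> carrier_mat k k" by (auto simp: P'_def Q'_def)
  have "P' * Q' = P * Q"
  proof (rule eq_matI)
    fix i j assume "i < dim_row (P * Q)" "j < dim_col (P * Q)"
    then have i: "i < k" and j: "j < k" using P Q by auto
    have "(P' * Q') $$ (i, j) = (\<Sum>l\<in>{0..<k}. (if l < d then P $$ (i, l) * Q $$ (l, j) else 0))"
      using i j by (auto simp: P'_def Q'_def scalar_prod_def intro!: sum.cong)
    also have "\<dots> = (\<Sum>l\<in>{0..<d}. P $$ (i, l) * Q $$ (l, j))"
      using dk by (intro sum.mono_neutral_cong_right) auto
    also have "\<dots> = (P * Q) $$ (i, j)" using i j P Q by (simp add: scalar_prod_def)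
    finally show "(P' * Q') $$ (i, j) = (P * Q) $$ (i, j)" .
  qed (use P Q in \<open>auto simp: P'_def Q'_def\<close>)
  then have "det (P' * Q') = 1" using PQ by simp
  moreover have "det P' = 0"
  proof -
    have "P' *\<^sub>v unit_vec k d = 0\<^sub>v k"
      by (rule eq_vecI) (auto simp: P'_def scalar_prod_def unit_vec_def intro!: sum.neutral)
    moreover have "unit_vec k d \<noteq> (0\<^sub>v k :: complex vec)"
    proof
      assume "unit_vec k d = (0\<^sub>v k :: complex vec)"
      then have "(unit_vec k d :: complex vec) $ d = (0\<^sub>v k :: complex vec) $ d" by simp
      then show False using dk by simp
    qed
    moreover have "unit_vec k d \<in> carrier_vec k" by simp
    ultimately show ?thesis using det_0_iff_vec_prod_zero_field[OF P'c] by blast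
  qed
  ultimately show False using det_mult[OF P'c Q'c] by simp
qed

lemma root_unity_sum:
  fixes K j :: nat
  assumes K: "K > 0" and j: "j < K"
  shows "(\<Sum>k<K. (cis (2 * pi / K) ^ j) ^ k) = (if j = 0 then of_nat K else 0)"
proof (cases "j = 0")
  case True then show ?thesis by simp
next
  case False
  define z where "z = cis (2 * pi / K) ^ j"
  have c: "cis (real j * (2 * pi)) = 1" using cis_multiple_2pi[of "real j"] by (simp add: mult.commute)
  have zK: "z ^ K = 1" unfolding z_def
      using K c by (simp add: DeMoivre power_mult[symmetric] mult.commute[of j K])
  have z1: "z \<noteq> 1"
  proof
    assume "z = 1"
    then have "cis (real j * (2 * pi / K)) = 1" unfolding z_def by (simp add: DeMoivre)
    then have "cos (real j * (2 * pi / K)) = 1" by (metis cis.sel(1) one_complex.sel(1))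
    then obtain m :: int where m: "real j * (2 * pi / K) = real_of_int m * 2 * pi"
      using cos_one_2pi_int by blast
    then have "real j = real_of_int m * K" using K by (simp add: field_simps)
    then have h: "real_of_int m * real K = real j" by simp
    consider "m \<le> 0" | "m \<ge> 1" by linarith
    then show False
    proof cases
      case 1
      then have "real_of_int m * real K \<le> 0" by (simp add: mult_nonpos_nonneg)
      then show False using h False by simp
    next
      case 2
      then have "real K \<le> real_of_int m * real K" using mult_right_mono[of 1 "real_of_int m" "real K"] by simp
      then show False using h j by simp
    qed
  qed
  show ?thesis using geometric_sum[OF z1, of K] zK False by (simp add: z_def)
qed

context vf
begin

abbreviation Rn where "Rn n \<equiv> val_ring v Quot val_ideal v n"

lemma a_inv_Quot: "x \<in> val_ideal v 0 \<Longrightarrow> \<ominus>\<^bsub>Rn n\<^esub> cls n x = cls n (- x)"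
proof -
  interpret cring "Rn n" by (rule cring_Quot)
  assume x: "x \<in> val_ideal v 0"
  have mx: "- x \<in> val_ideal v 0" using I_neg[OF x] .
  show ?thesis
    by (rule minus_equality) (use x mx in \<open>auto simp: carrier_Quot Quot_ops Quot_one_zero\<close>)
qed

lemma one_not_I1: "1 \<notin> val_ideal v 1" by (simp add: mem_I)

lemma units_Quot:
  assumes n: "n \<ge> 1" and x: "x \<in> val_ideal v 0"
  shows "cls n x \<in> Units (Rn n) \<longleftrightarrow> x \<notin> val_ideal v 1"
proof
  assume "cls n x \<in> Units (Rn n)"
  then obtain c where c: "c \<in> carrier (Rn n)" "c \<otimes>\<^bsub>Rn n\<^esub> cls n x = \<one>\<^bsub>Rn n\<^esub>"
    unfolding Units_def by auto
  obtain y where y: "y \<in> val_ideal v 0" "c = cls n y" using c(1) by (auto simp: carrier_Quot)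
  have "cls n (y * x) = cls n 1" using c(2) y x by (simp add: Quot_ops Quot_one_zero)
  then have yx: "y * x - 1 \<in> val_ideal v 1" using I_sub[of 1 n] n by (simp add: cls_eq)
  show "x \<notin> val_ideal v 1"
  proof
    assume "x \<in> val_ideal v 1"
    then have "y * x \<in> val_ideal v 1" using I_mult0[OF y(1)] by blast
    then have "y * x - (y * x - 1) \<in> val_ideal v 1" using I_diff yx by blast
    then show False using one_not_I1 by simp
  qed
next
  assume nx: "x \<notin> val_ideal v 1"
  then have x0: "x \<noteq> 0" "v x = 0" using x by (auto simp: mem_I)
  have y: "inverse x \<in> val_ideal v 0" using vinv[OF x0(1)] x0 by (simp add: mem_I)
  have "cls n (inverse x) \<otimes>\<^bsub>Rn n\<^esub> cls n x = \<one>\<^bsub>Rn n\<^esub>"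
       "cls n x \<otimes>\<^bsub>Rn n\<^esub> cls n (inverse x) = \<one>\<^bsub>Rn n\<^esub>"
    using x y x0 by (simp_all add: Quot_ops Quot_one_zero)
  then show "cls n x \<in> Units (Rn n)"
    unfolding Units_def using x y by (auto simp: carrier_Quot)
qed

lemma units_eq:
  assumes n: "n \<ge> 1"
  shows "Units (Rn n) = carrier (Rn n) - cls n ` val_ideal v 1"
proof (intro equalityI subsetI)
  fix c assume c: "c \<in> Units (Rn n)"
  then have cc: "c \<in> carrier (Rn n)" unfolding Units_def by auto
  then obtain x where x: "x \<in> val_ideal v 0" "c = cls n x" by (auto simp: carrier_Quot)
  have "c \<notin> cls n ` val_ideal v 1"
  proof
    assume "c \<in> cls n ` val_ideal v 1"
    then obtain z where z: "z \<in> val_ideal v 1" "c = cls n z" by auto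
    have "z \<in> val_ideal v 0" using I_sub[of 0 1] z by auto
    then show False using units_Quot[OF n] c z by auto
  qed
  then show "c \<in> carrier (Rn n) - cls n ` val_ideal v 1" using cc by simp
next
  fix c assume c: "c \<in> carrier (Rn n) - cls n ` val_ideal v 1"
  then obtain x where x: "x \<in> val_ideal v 0" "c = cls n x" by (auto simp: carrier_Quot)
  then have "x \<notin> val_ideal v 1" using c by auto
  then show "c \<in> Units (Rn n)" using units_Quot[OF n x(1)] x by simp
qed

lemma card_units:
  assumes n: "n \<ge> 1"
  shows "card (Units (Rn n)) = residue_card v ^ n - residue_card v ^ (n - 1)"
proof -
  have q: "residue_card v = card (Q 1)" unfolding residue_card_def by (simp add: carrier_Quot)
  have sub: "cls n ` val_ideal v 1 \<subseteq> carrier (Rn n)"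
    using I_sub[of 0 1] by (auto simp: carrier_Quot)
  have fin: "finite (carrier (Rn n))" using cardQ[of n] by (simp add: carrier_Quot)
  obtain m where m: "n = Suc m" using n by (cases n) auto
  have "card (Q m) = card (cls (Suc m) ` val_ideal v 1)"
    by (rule bij_betw_same_card[OF shift_bij[of m]])
  moreover have "card (Q m) = residue_card v ^ m" using cardQ[of m] q by simp
  ultimately have "card (cls n ` val_ideal v 1) = residue_card v ^ (n - 1)" unfolding m by simp
  moreover have "card (carrier (Rn n)) = residue_card v ^ n" using cardQ[of n] q by (simp add: carrier_Quot)
  ultimately show ?thesis using units_eq[OF n] card_Diff_subset[OF finite_subset[OF sub fin] sub] by simp
qed

end

lemma vec_nz: "w \<in> carrier_vec d \<Longrightarrow> w \<noteq> 0\<^sub>v d \<Longrightarrow> \<exists>i<d. w $ i \<noteq> 0"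
  by (metis carrier_vecD eq_vecI index_zero_vec(1,2))

lemma smult_vec_cancel: "w \<in> carrier_vec d \<Longrightarrow> w \<noteq> 0\<^sub>v d \<Longrightarrow> (a::complex) \<cdot>\<^sub>v w = b \<cdot>\<^sub>v w \<Longrightarrow> a = b"
proof -
  assume w: "w \<in> carrier_vec d" "w \<noteq> 0\<^sub>v d" and e: "a \<cdot>\<^sub>v w = b \<cdot>\<^sub>v w"
  obtain i where i: "i < d" "w $ i \<noteq> 0" using vec_nz[OF w] by blast
  have "(a \<cdot>\<^sub>v w) $ i = (b \<cdot>\<^sub>v w) $ i" using e by simp
  then show "a = b" using i w by simp
qed

locale addrep = cring R for R (structure) +
  fixes A :: "'r \<Rightarrow> complex mat" and d :: nat
  assumes finR: "finite (carrier R)"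
  and A_carr: "x \<in> carrier R \<Longrightarrow> A x \<in> carrier_mat d d"
  and A_add: "x \<in> carrier R \<Longrightarrow> y \<in> carrier R \<Longrightarrow> A (x \<oplus> y) = A x * A y"
  and A_zero: "A \<zero> = 1\<^sub>m d"
begin

lemma A_comm: "x \<in> carrier R \<Longrightarrow> y \<in> carrier R \<Longrightarrow> A x * A y = A y * A x"
  using A_add a_comm by metis

definition nm :: "'r \<Rightarrow> nat \<Rightarrow> 'r" where "nm x j = ((\<lambda>y. x \<oplus> y) ^^ j) \<zero>"

lemma nm_0[simp]: "nm x 0 = \<zero>" by (simp add: nm_def)
lemma nm_Suc: "nm x (Suc j) = x \<oplus> nm x j" by (simp add: nm_def)
lemma nm_carr[simp]: "x \<in> carrier R \<Longrightarrow> nm x j \<in> carrier R"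
  by (induction j) (auto simp: nm_Suc)

lemma nm_add: "x \<in> carrier R \<Longrightarrow> nm x (a + b) = nm x a \<oplus> nm x b"
  by (induction a) (auto simp: nm_Suc a_assoc)

lemma period: assumes x: "x \<in> carrier R" shows "\<exists>K>0. nm x K = \<zero>"
proof -
  have "range (nm x) \<subseteq> carrier R" using x by auto
  then have "finite (range (nm x))" using finR finite_subset by blast
  then have "\<not> inj (nm x)" using finite_imageD infinite_UNIV_nat by blast
  then obtain i j where ij: "i \<noteq> j" "nm x i = nm x j" unfolding inj_def by blast
  have "\<exists>i j. i < j \<and> nm x i = nm x j"
    using ij by (metis linorder_neqE_nat)
  then obtain i j where ij: "i < j" "nm x i = nm x j" by blast
  have "nm x i \<oplus> nm x (j - i) = nm x i \<oplus> \<zero>"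
    using ij x by (metis add_diff_inverse_nat nm_add nm_carr not_less_iff_gr_or_eq r_zero)
  then have "nm x (j - i) = \<zero>" using x by (metis add.l_cancel_one' nm_carr r_zero zero_closed)
  then show ?thesis using ij by (intro exI[of _ "j - i"]) auto
qed

lemma A_nm: "x \<in> carrier R \<Longrightarrow> A (nm x (Suc j)) = A x * A (nm x j)"
  by (simp add: nm_Suc A_add)

end

lemma mat_vec_zero[simp]: "(A :: complex mat) \<in> carrier_mat n d \<Longrightarrow> A *\<^sub>v 0\<^sub>v d = 0\<^sub>v n"
  by (rule eq_vecI) (auto simp: scalar_prod_def)

lemma smat_vec: "(B :: complex mat) \<in> carrier_mat n d \<Longrightarrow> u \<in> carrier_vec d \<Longrightarrow> (z \<cdot>\<^sub>m B) *\<^sub>v u = z \<cdot>\<^sub>v (B *\<^sub>v u)"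
  by (rule eq_vecI) (auto simp: scalar_prod_def sum_distrib_left mult_ac)

context addrep
begin

definition Pm :: "'r \<Rightarrow> nat \<Rightarrow> complex \<Rightarrow> complex mat" where
  "Pm x K z = mlc d {..<K} (\<lambda>j. z ^ j) (\<lambda>j. A (nm x j))"

lemma Pm_carr[simp]: "Pm x K z \<in> carrier_mat d d" by (simp add: Pm_def)

lemma Pm_dims[simp]: "dim_row (Pm x K z) = d" "dim_col (Pm x K z) = d" by (simp_all add: Pm_def)

lemma Pm_comm:
  assumes x: "x \<in> carrier R" and X: "X \<in> carrier_mat d d" and XA: "\<And>y. y \<in> carrier R \<Longrightarrow> X * A y = A y * X"
  shows "X * Pm x K z = Pm x K z * X"
  unfolding Pm_def using x X XA A_carr by (simp add: mlc_left mlc_right)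

lemma Pm_eig:
  assumes x: "x \<in> carrier R" and K: "nm x K = \<zero>" and zK: "z ^ K = 1"
  shows "z \<cdot>\<^sub>m (A x * Pm x K z) = Pm x K z"
proof -
  have Ax: "A x \<in> carrier_mat d d" using A_carr x by simp
  have "A x * Pm x K z = mlc d {..<K} (\<lambda>j. z ^ j) (\<lambda>j. A (nm x (Suc j)))"
    unfolding Pm_def using Ax A_carr x by (simp add: mlc_left A_nm)
  show ?thesis
  proof (rule eq_matI)
    fix i j assume ij: "i < dim_row (Pm x K z)" "j < dim_col (Pm x K z)"
    then have i: "i < d" and j: "j < d" by auto
    define f where "f l = z ^ l * A (nm x l) $$ (i, j)" for l
    have "(z \<cdot>\<^sub>m (A x * Pm x K z)) $$ (i, j) = z * (\<Sum>l<K. z ^ l * A (nm x (Suc l)) $$ (i, j))"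
      using \<open>A x * Pm x K z = _\<close> i j by (simp add: mlc_index)
    also have "\<dots> = (\<Sum>l<K. f (Suc l))" by (simp add: f_def sum_distrib_left mult_ac)
    also have "\<dots> = (\<Sum>l<K. f l)"
    proof -
      have "(\<Sum>l<Suc K. f l) = f 0 + (\<Sum>l<K. f (Suc l))" by (rule sum.lessThan_Suc_shift)
      moreover have "(\<Sum>l<Suc K. f l) = (\<Sum>l<K. f l) + f K" by simp
      moreover have "f K = f 0" by (simp add: f_def K zK)
      ultimately show ?thesis by simp
    qed
    also have "\<dots> = Pm x K z $$ (i, j)" using i j by (simp add: Pm_def mlc_index f_def)
    finally show "(z \<cdot>\<^sub>m (A x * Pm x K z)) $$ (i, j) = Pm x K z $$ (i, j)" .
  qed (use Ax in auto)
qed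

lemma Pm_sum:
  assumes x: "x \<in> carrier R" and K: "K > 0" and w: "w \<in> carrier_vec d"
  shows "vec d (\<lambda>i. \<Sum>k<K. (Pm x K (cis (2 * pi / K) ^ k) *\<^sub>v w) $ i) = of_nat K \<cdot>\<^sub>v w"
proof (rule eq_vecI)
  define \<omega> where "\<omega> = cis (2 * pi / K)"
  fix i assume "i < dim_vec (of_nat K \<cdot>\<^sub>v w)"
  then have i: "i < d" using w by simp
  have "(\<Sum>k<K. (Pm x K (\<omega> ^ k) *\<^sub>v w) $ i) = (\<Sum>k<K. \<Sum>j<K. (\<omega> ^ k) ^ j * (A (nm x j) *\<^sub>v w) $ i)"
    using w x A_carr i by (simp add: Pm_def mlc_vec)
  also have "\<dots> = (\<Sum>j<K. (\<Sum>k<K. (\<omega> ^ j) ^ k) * (A (nm x j) *\<^sub>v w) $ i)"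
    by (subst sum.swap) (simp add: sum_distrib_right power_mult[symmetric] mult.commute)
  also have "\<dots> = (\<Sum>j<K. (if j = 0 then of_nat K * (A (nm x j) *\<^sub>v w) $ i else 0))"
    by (rule sum.cong[OF refl]) (use root_unity_sum[OF K] in \<open>simp add: \<omega>_def\<close>)
  also have "\<dots> = of_nat K * w $ i" using K w by (simp add: A_zero)
  finally show "vec d (\<lambda>i. \<Sum>k<K. (Pm x K (cis (2 * pi / K) ^ k) *\<^sub>v w) $ i) $ i = (of_nat K \<cdot>\<^sub>v w) $ i"
    using i w by (simp add: \<omega>_def)
qed (use w in auto)


lemma eig_step:
  assumes x: "x \<in> carrier R" and w: "w \<in> carrier_vec d" "w \<noteq> 0\<^sub>v d"
    and C: "C \<in> carrier_mat d d" "\<And>y. y \<in> carrier R \<Longrightarrow> C * A y = A y * C" "C *\<^sub>v w = 0\<^sub>v d"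
    and T: "T \<subseteq> carrier R" "\<forall>y\<in>T. \<exists>c. A y *\<^sub>v w = c \<cdot>\<^sub>v w"
  shows "\<exists>w'. w' \<in> carrier_vec d \<and> w' \<noteq> 0\<^sub>v d \<and> C *\<^sub>v w' = 0\<^sub>v d \<and> (\<forall>y\<in>insert x T. \<exists>c. A y *\<^sub>v w' = c \<cdot>\<^sub>v w')"
proof -
  obtain K where K: "K > 0" "nm x K = \<zero>" using period[OF x] by blast
  define \<omega> where "\<omega> = cis (2 * pi / K)"
  have "\<exists>k<K. Pm x K (\<omega> ^ k) *\<^sub>v w \<noteq> 0\<^sub>v d"
  proof (rule ccontr)
    assume "\<not> ?thesis"
    then have "\<And>k. k < K \<Longrightarrow> Pm x K (\<omega> ^ k) *\<^sub>v w = 0\<^sub>v d" by blast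
    then have "vec d (\<lambda>i. \<Sum>k<K. (Pm x K (\<omega> ^ k) *\<^sub>v w) $ i) = 0\<^sub>v d"
      by (intro eq_vecI) auto
    then have "of_nat K \<cdot>\<^sub>v w = 0\<^sub>v d" using Pm_sum[OF x K(1) w(1)] by (simp add: \<omega>_def)
    then have "(of_nat K :: complex) \<cdot>\<^sub>v w = 0 \<cdot>\<^sub>v w" using w by auto
    then have "(of_nat K :: complex) = 0" using smult_vec_cancel[OF w] by blast
    then show False using K by simp
  qed
  then obtain k where k: "k < K" and nz: "Pm x K (\<omega> ^ k) *\<^sub>v w \<noteq> 0\<^sub>v d" by blast
  define z where "z = \<omega> ^ k"
  define P where "P = Pm x K z"
  define w' where "w' = P *\<^sub>v w"
  have P: "P \<in> carrier_mat d d" by (simp add: P_def)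
  have w'c: "w' \<in> carrier_vec d" using P w by (simp add: w'_def)
  have zK: "z ^ K = 1"
  proof -
    have "\<omega> ^ K = 1" unfolding \<omega>_def using K by (simp add: DeMoivre)
    then show ?thesis unfolding z_def by (metis power_mult power_mult_distrib power_one mult.commute)
  qed
  have z0: "z \<noteq> 0" using zK K by (metis power_0_left zero_neq_one gr_implies_not0)
  have PA: "P * A y = A y * P" if "y \<in> carrier R" for y
    unfolding P_def using Pm_comm[OF x A_carr[OF that]] A_comm that x by metis
  have PC: "C * P = P * C" unfolding P_def by (rule Pm_comm[OF x C(1) C(2)])
  have "C *\<^sub>v w' = 0\<^sub>v d"
  proof -
    have "C *\<^sub>v w' = (C * P) *\<^sub>v w" using C(1) P w by (simp add: w'_def)
    also have "\<dots> = P *\<^sub>v (C *\<^sub>v w)" using C(1) P w PC by simp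
    finally show ?thesis using C(3) P by simp
  qed
  moreover have "\<forall>y\<in>insert x T. \<exists>c. A y *\<^sub>v w' = c \<cdot>\<^sub>v w'"
  proof
    fix y assume "y \<in> insert x T"
    then consider "y = x" | "y \<in> T" by blast
    then show "\<exists>c. A y *\<^sub>v w' = c \<cdot>\<^sub>v w'"
    proof cases
      case 1
      have Ax: "A x \<in> carrier_mat d d" using A_carr x by simp
      have e: "z \<cdot>\<^sub>m (A x * P) = P" unfolding P_def by (rule Pm_eig[OF x K(2) zK])
      have "w' = (z \<cdot>\<^sub>m (A x * P)) *\<^sub>v w" using e by (simp add: w'_def)
      also have "\<dots> = z \<cdot>\<^sub>v ((A x * P) *\<^sub>v w)"
        by (rule smat_vec) (use Ax P w in auto)
      also have "\<dots> = z \<cdot>\<^sub>v (A x *\<^sub>v w')" using Ax P w by (simp add: w'_def)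
      finally have "inverse z \<cdot>\<^sub>v w' = A x *\<^sub>v w'" using z0
        by (metis smult_smult_assoc left_inverse one_smult_vec)
      then show ?thesis using 1 by metis
    next
      case 2
      then obtain c where c: "A y *\<^sub>v w = c \<cdot>\<^sub>v w" using T by blast
      have Ay: "A y \<in> carrier_mat d d" using A_carr T 2 by blast
      have "A y *\<^sub>v w' = (A y * P) *\<^sub>v w" using Ay P w by (simp add: w'_def)
      also have "\<dots> = (P * A y) *\<^sub>v w"
      proof -
        have eq: "A y * P = P * A y" using PA[of y] T 2 by auto
        show ?thesis by (simp only: eq)
      qed
      also have "\<dots> = P *\<^sub>v (A y *\<^sub>v w)" using Ay P w by simp
      also have "\<dots> = c \<cdot>\<^sub>v w'" using c P w by (simp add: mult_mat_vec w'_def)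
      finally show ?thesis by blast
    qed
  qed
  ultimately show ?thesis using w'c nz unfolding w'_def P_def z_def by blast
qed

lemma common_eig:
  assumes w0: "w0 \<in> carrier_vec d" "w0 \<noteq> 0\<^sub>v d"
    and C: "C \<in> carrier_mat d d" "\<And>y. y \<in> carrier R \<Longrightarrow> C * A y = A y * C" "C *\<^sub>v w0 = 0\<^sub>v d"
  shows "\<exists>w. w \<in> carrier_vec d \<and> w \<noteq> 0\<^sub>v d \<and> C *\<^sub>v w = 0\<^sub>v d \<and> (\<forall>y\<in>carrier R. \<exists>c. A y *\<^sub>v w = c \<cdot>\<^sub>v w)"
proof -
  have "S \<subseteq> carrier R \<Longrightarrow> \<exists>w. w \<in> carrier_vec d \<and> w \<noteq> 0\<^sub>v d \<and> C *\<^sub>v w = 0\<^sub>v d \<and> (\<forall>y\<in>S. \<exists>c. A y *\<^sub>v w = c \<cdot>\<^sub>v w)"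
    if "finite S" for S
    using that
  proof (induction S rule: finite_induct)
    case empty then show ?case using w0 C by blast
  next
    case (insert x S)
    then obtain w where w: "w \<in> carrier_vec d" "w \<noteq> 0\<^sub>v d" "C *\<^sub>v w = 0\<^sub>v d" "\<forall>y\<in>S. \<exists>c. A y *\<^sub>v w = c \<cdot>\<^sub>v w"
      by blast
    show ?case using eig_step[of x w C S] insert.prems w C by blast
  qed
  then show ?thesis using finR by blast
qed

end

lemma mlc_cong: "(\<And>t. t \<in> I \<Longrightarrow> F t = G t) \<Longrightarrow> mlc d I c F = mlc d I c G"
  unfolding mlc_def by (intro cong_mat refl) (auto intro!: sum.cong)

context addrep
begin

lemma eig_hom:
  assumes w: "w \<in> carrier_vec d" "w \<noteq> 0\<^sub>v d" and ev: "\<forall>x\<in>carrier R. A x *\<^sub>v w = lam x \<cdot>\<^sub>v w"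
  shows "\<And>x y. x \<in> carrier R \<Longrightarrow> y \<in> carrier R \<Longrightarrow> lam (x \<oplus> y) = lam x * lam y"
    and "lam \<zero> = 1"
proof -
  fix x y assume x: "x \<in> carrier R" and y: "y \<in> carrier R"
  have "lam (x \<oplus> y) \<cdot>\<^sub>v w = A (x \<oplus> y) *\<^sub>v w" using ev x y by simp
  also have "\<dots> = A x *\<^sub>v (A y *\<^sub>v w)" using A_add[OF x y] A_carr[OF x] A_carr[OF y] w by simp
  also have "\<dots> = lam y \<cdot>\<^sub>v (A x *\<^sub>v w)" using ev y A_carr[OF x] w by (simp add: mult_mat_vec)
  also have "\<dots> = (lam x * lam y) \<cdot>\<^sub>v w" using ev x by (simp add: smult_smult_assoc mult.commute)
  finally show "lam (x \<oplus> y) = lam x * lam y" using smult_vec_cancel[OF w] by blast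
next
  have "A \<zero> *\<^sub>v w = lam \<zero> \<cdot>\<^sub>v w" using ev by simp
  then have "lam \<zero> \<cdot>\<^sub>v w = 1 \<cdot>\<^sub>v w" using w by (simp add: A_zero)
  then show "lam \<zero> = 1" using smult_vec_cancel[OF w] by blast
qed

lemma shift_bij:
  assumes M: "M \<subseteq> carrier R" "\<And>x y. x \<in> M \<Longrightarrow> y \<in> M \<Longrightarrow> x \<oplus> y \<in> M" "\<And>x. x \<in> M \<Longrightarrow> \<ominus> x \<in> M"
    and m: "m \<in> M"
  shows "bij_betw (\<lambda>x. m \<oplus> x) M M"
proof (rule bij_betwI')
  fix x y assume "x \<in> M" "y \<in> M"
  then have xy: "x \<in> carrier R" "y \<in> carrier R" "m \<in> carrier R" using M m by auto
  show "(m \<oplus> x = m \<oplus> y) = (x = y)"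
  proof
    assume "m \<oplus> x = m \<oplus> y"
    then have "\<ominus> m \<oplus> (m \<oplus> x) = \<ominus> m \<oplus> (m \<oplus> y)" by simp
    then show "x = y" using xy by (simp add: a_assoc[symmetric])
  qed simp
next
  fix x assume "x \<in> M" then show "m \<oplus> x \<in> M" using M m by blast
next
  fix y assume y: "y \<in> M"
  have mc: "m \<in> carrier R" "y \<in> carrier R" using y m M by auto
  have "m \<oplus> (\<ominus> m \<oplus> y) = y" using mc by (simp add: a_assoc[symmetric] r_neg)
  moreover have "\<ominus> m \<oplus> y \<in> M" using M y m by blast
  ultimately show "\<exists>x\<in>M. y = m \<oplus> x" by metis
qed

lemma char_exists:
  assumes M: "M \<subseteq> carrier R" "\<And>x y. x \<in> M \<Longrightarrow> y \<in> M \<Longrightarrow> x \<oplus> y \<in> M" "\<And>x. x \<in> M \<Longrightarrow> \<ominus> x \<in> M"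
    and m0: "m0 \<in> M" "A m0 \<noteq> 1\<^sub>m d"
  shows "\<exists>w lam. w \<in> carrier_vec d \<and> w \<noteq> 0\<^sub>v d \<and> (\<forall>x\<in>carrier R. A x *\<^sub>v w = lam x \<cdot>\<^sub>v w) \<and> (\<Sum>m\<in>M. lam m) = 0"
proof -
  define C where "C = mlc d M (\<lambda>_. 1) A"
  define c :: complex where "c = of_nat (card M)"
  have finM: "finite M" using M(1) finR finite_subset by blast
  have c0: "c \<noteq> 0" using finM m0(1) by (auto simp: c_def)
  have AM: "\<And>t. t \<in> M \<Longrightarrow> A t \<in> carrier_mat d d" using A_carr M(1) by blast
  have Cc: "C \<in> carrier_mat d d" by (simp add: C_def)
  have CA: "C * A y = A y * C" if y: "y \<in> carrier R" for y
  proof -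
    have "C * A y = mlc d M (\<lambda>_. 1) (\<lambda>t. A t * A y)" unfolding C_def using AM A_carr[OF y] by (simp add: mlc_right)
    also have "\<dots> = mlc d M (\<lambda>_. 1) (\<lambda>t. A y * A t)" using A_comm y M(1) by (intro mlc_cong) blast
    also have "\<dots> = A y * C" unfolding C_def using AM A_carr[OF y] by (simp add: mlc_left)
    finally show ?thesis .
  qed
  have shift: "A m * C = C" if m: "m \<in> M" for m
  proof -
    have "A m * C = mlc d M (\<lambda>_. 1) (\<lambda>t. A m * A t)" unfolding C_def using AM m by (simp add: mlc_left)
    also have "\<dots> = mlc d M (\<lambda>_. 1) (\<lambda>t. A (m \<oplus> t))" using A_add M(1) m by (intro mlc_cong) (simp add: subsetD)
    also have "\<dots> = C"
      unfolding C_def mlc_def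
    proof (intro cong_mat refl)
      fix i j
      show "(case (i, j) of (i, j) \<Rightarrow> \<Sum>t\<in>M. 1 * A (m \<oplus> t) $$ (i, j)) = (case (i, j) of (i, j) \<Rightarrow> \<Sum>t\<in>M. 1 * A t $$ (i, j))"
        using sum.reindex_bij_betw[OF shift_bij[OF M m], of "\<lambda>t. 1 * A t $$ (i, j)"] by simp
    qed
    finally show ?thesis .
  qed
  have CC: "C * C = c \<cdot>\<^sub>m C"
  proof -
    have "C * C = mlc d M (\<lambda>_. 1) (\<lambda>t. A t * C)" unfolding C_def using AM by (simp add: mlc_right)
    also have "\<dots> = mlc d M (\<lambda>_. 1) (\<lambda>t. C)" using shift by (intro mlc_cong) blast
    also have "\<dots> = c \<cdot>\<^sub>m C" using Cc by (intro eq_matI) (auto simp: mlc_index c_def)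
    finally show ?thesis .
  qed
  have Cne: "C \<noteq> c \<cdot>\<^sub>m 1\<^sub>m d"
  proof
    assume h: "C = c \<cdot>\<^sub>m 1\<^sub>m d"
    have "A m0 * (c \<cdot>\<^sub>m 1\<^sub>m d) = c \<cdot>\<^sub>m 1\<^sub>m d" using shift[OF m0(1)] h by simp
    moreover have "A m0 * (c \<cdot>\<^sub>m 1\<^sub>m d) = c \<cdot>\<^sub>m (A m0 * 1\<^sub>m d)"
      by (rule mult_smult_distrib[OF AM[OF m0(1)], of "1\<^sub>m d" d]) simp
    ultimately have e: "c \<cdot>\<^sub>m A m0 = c \<cdot>\<^sub>m 1\<^sub>m d" using AM[OF m0(1)] by simp
    have "A m0 = 1\<^sub>m d"
    proof (rule eq_matI)
      fix i j assume "i < dim_row (1\<^sub>m d)" "j < dim_col (1\<^sub>m d)"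
      then have ij: "i < d" "j < d" by auto
      have "(c \<cdot>\<^sub>m A m0) $$ (i, j) = (c \<cdot>\<^sub>m 1\<^sub>m d) $$ (i, j)" using e by simp
      then show "A m0 $$ (i, j) = 1\<^sub>m d $$ (i, j)" using ij AM[OF m0(1)] c0 by auto
    qed (use AM[OF m0(1)] in auto)
    then show False using m0(2) by simp
  qed
  obtain i j where ij: "i < d" "j < d" "C $$ (i, j) \<noteq> (c \<cdot>\<^sub>m 1\<^sub>m d) $$ (i, j)"
    using Cne Cc by (metis carrier_matD eq_matI index_one_mat(2,3) index_smult_mat(2,3))
  define z :: "complex vec" where "z = unit_vec d j"
  have zc: "z \<in> carrier_vec d" by (simp add: z_def)
  define w0 where "w0 = c \<cdot>\<^sub>v z - C *\<^sub>v z"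
  have w0c: "w0 \<in> carrier_vec d" using zc Cc by (simp add: w0_def)
  have w0nz: "w0 \<noteq> 0\<^sub>v d"
  proof
    assume "w0 = 0\<^sub>v d"
    then have "w0 $ i = 0" using ij by simp
    moreover have "w0 $ i = c * z $ i - C $$ (i, j)" using ij Cc zc by (simp add: w0_def z_def)
    ultimately show False using ij by (simp add: z_def)
  qed
  have Cw0: "C *\<^sub>v w0 = 0\<^sub>v d"
  proof -
    have "C *\<^sub>v w0 = C *\<^sub>v (c \<cdot>\<^sub>v z) - C *\<^sub>v (C *\<^sub>v z)"
      unfolding w0_def using Cc zc by (simp add: mult_minus_distrib_mat_vec)
    also have "\<dots> = c \<cdot>\<^sub>v (C *\<^sub>v z) - (C * C) *\<^sub>v z" using Cc zc by (simp add: mult_mat_vec)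
    also have "\<dots> = c \<cdot>\<^sub>v (C *\<^sub>v z) - (c \<cdot>\<^sub>m C) *\<^sub>v z" by (simp add: CC)
    also have "\<dots> = 0\<^sub>v d" using Cc zc by (simp add: smat_vec)
    finally show ?thesis .
  qed
  obtain w where w: "w \<in> carrier_vec d" "w \<noteq> 0\<^sub>v d" "C *\<^sub>v w = 0\<^sub>v d"
    and ev: "\<forall>y\<in>carrier R. \<exists>c. A y *\<^sub>v w = c \<cdot>\<^sub>v w"
    using common_eig[OF w0c w0nz Cc CA Cw0] by blast
  define lam where "lam y = (SOME c. A y *\<^sub>v w = c \<cdot>\<^sub>v w)" for y
  have lam: "\<forall>y\<in>carrier R. A y *\<^sub>v w = lam y \<cdot>\<^sub>v w"
    using ev unfolding lam_def by (metis (mono_tags, lifting) someI_ex)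
  have "C *\<^sub>v w = vec d (\<lambda>i. \<Sum>t\<in>M. 1 * (A t *\<^sub>v w) $ i)" unfolding C_def using w AM by (simp add: mlc_vec)
  also have "\<dots> = (\<Sum>m\<in>M. lam m) \<cdot>\<^sub>v w"
    using w lam M(1) by (intro eq_vecI) (auto simp: sum_distrib_right subsetD intro!: sum.cong)
  finally have e1: "(\<Sum>m\<in>M. lam m) \<cdot>\<^sub>v w = 0\<^sub>v d" using w(3) by simp
  have "0 \<cdot>\<^sub>v w = 0\<^sub>v d" by (rule eq_vecI) (use w in auto)
  then have "(\<Sum>m\<in>M. lam m) \<cdot>\<^sub>v w = 0 \<cdot>\<^sub>v w" using e1 by simp
  then have "(\<Sum>m\<in>M. lam m) = 0" using smult_vec_cancel[OF w(1,2)] by blast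
  then show ?thesis using w lam by blast
qed

end

lemma bij_delta_sum:
  assumes g: "bij_betw g {..<(K::nat)} S" and c: "c \<in> S"
  shows "(\<Sum>l<K. if g l = c then f l else 0) = f (inv_into {..<K} g c)"
proof -
  define l0 where "l0 = inv_into {..<K} g c"
  have l0: "l0 < K" "g l0 = c" using g c unfolding l0_def
    by (auto simp: bij_betw_def inv_into_into f_inv_into_f)
  have "(\<Sum>l<K. if g l = c then f l else 0) = (\<Sum>l<K. if l = l0 then f l else 0)"
  proof (rule sum.cong[OF refl])
    fix l assume "l \<in> {..<K}"
    then have "g l = c \<longleftrightarrow> l = l0" using l0 g unfolding bij_betw_def inj_on_def by auto
    then show "(if g l = c then f l else 0) = (if l = l0 then f l else 0)" by simp
  qed
  also have "\<dots> = f l0" using l0 by simp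
  finally show ?thesis unfolding l0_def .
qed

locale affset = cring R for R (structure) +
  fixes M
  assumes finR: "finite (carrier R)"
  and M_sub: "M \<subseteq> carrier R"
  and M_add: "\<And>x y. x \<in> M \<Longrightarrow> y \<in> M \<Longrightarrow> x \<oplus> y \<in> M"
  and M_neg: "\<And>x. x \<in> M \<Longrightarrow> \<ominus> x \<in> M"
  and M_nz: "\<exists>m\<in>M. m \<noteq> \<zero>"
  and M_div: "\<And>a m. a \<in> carrier R \<Longrightarrow> a \<noteq> \<zero> \<Longrightarrow> m \<in> M \<Longrightarrow> \<exists>b\<in>carrier R. m = a \<otimes> b"
  and nonunit: "\<And>r. r \<in> carrier R \<Longrightarrow> r \<notin> Units R \<Longrightarrow> r \<ominus> \<one> \<in> Units R"
begin

definition ischar :: "('a \<Rightarrow> complex) \<Rightarrow> bool" where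
  "ischar lam \<longleftrightarrow> (\<forall>x\<in>carrier R. \<forall>y\<in>carrier R. lam (x \<oplus> y) = lam x * lam y) \<and> lam \<zero> = 1
     \<and> (\<Sum>m\<in>M. lam m) = 0"

lemma finM: "finite M" using finR M_sub finite_subset by blast

lemma char_neg: "ischar lam \<Longrightarrow> x \<in> carrier R \<Longrightarrow> lam (\<ominus> x) * lam x = 1"
  unfolding ischar_def by (metis a_inv_closed l_neg)

lemma char_nz: "ischar lam \<Longrightarrow> x \<in> carrier R \<Longrightarrow> lam x \<noteq> 0"
  using char_neg by fastforce

lemma prim:
  assumes lam: "ischar lam" and a: "a \<in> carrier R" and h: "\<forall>b\<in>carrier R. lam (a \<otimes> b) = 1"
  shows "a = \<zero>"
proof (rule ccontr)
  assume "a \<noteq> \<zero>"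
  then have "\<forall>m\<in>M. lam m = 1" using M_div[OF a] h by metis
  then have "(\<Sum>m\<in>M. lam m) = of_nat (card M)" by simp
  moreover have "card M > 0" using M_nz finM card_gt_0_iff by blast
  ultimately show False using lam unfolding ischar_def by simp
qed

lemma prim_units:
  assumes lam: "ischar lam" and a: "a \<in> carrier R" and h: "\<forall>s\<in>Units R. lam (a \<otimes> s) = 1"
  shows "a = \<zero>"
proof (rule prim[OF lam a], intro ballI)
  fix b assume b: "b \<in> carrier R"
  show "lam (a \<otimes> b) = 1"
  proof (cases "b \<in> Units R")
    case True then show ?thesis using h by blast
  next
    case False
    then have u: "b \<ominus> \<one> \<in> Units R" using nonunit b by blast
    have bc: "b \<ominus> \<one> \<in> carrier R" using b by simp
    have "a \<otimes> b = a \<otimes> \<one> \<oplus> a \<otimes> (b \<ominus> \<one>)" using a b by algebra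
    then have "lam (a \<otimes> b) = lam (a \<otimes> \<one>) * lam (a \<otimes> (b \<ominus> \<one>))"
      using lam a bc unfolding ischar_def by simp
    also have "\<dots> = 1" using h u by auto
    finally show ?thesis .
  qed
qed

lemma char_sum_zero:
  assumes lam: "ischar lam" and a: "a \<in> carrier R" "a \<noteq> \<zero>"
  shows "(\<Sum>b\<in>carrier R. lam (a \<otimes> b)) = 0"
proof -
  obtain b0 where b0: "b0 \<in> carrier R" "lam (a \<otimes> b0) \<noteq> 1" using prim[OF lam a(1)] a(2) by blast
  have bij: "bij_betw (\<lambda>b. b0 \<oplus> b) (carrier R) (carrier R)"
  proof (rule bij_betwI')
    fix x y assume "x \<in> carrier R" "y \<in> carrier R"
    then show "(b0 \<oplus> x = b0 \<oplus> y) = (x = y)" using b0 by (metis a_assoc a_inv_closed l_neg l_zero)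
  next
    fix y assume y: "y \<in> carrier R"
    then have "y = b0 \<oplus> (\<ominus> b0 \<oplus> y)" using b0 by (simp add: a_assoc[symmetric] r_neg)
    then show "\<exists>x\<in>carrier R. y = b0 \<oplus> x" using y b0 by blast
  qed (use b0 in auto)
  define S where "S = (\<Sum>b\<in>carrier R. lam (a \<otimes> b))"
  have "S = (\<Sum>b\<in>carrier R. lam (a \<otimes> (b0 \<oplus> b)))"
    unfolding S_def using sum.reindex_bij_betw[OF bij, of "\<lambda>b. lam (a \<otimes> b)"] by simp
  also have "\<dots> = (\<Sum>b\<in>carrier R. lam (a \<otimes> b0) * lam (a \<otimes> b))"
    using lam a b0 unfolding ischar_def by (intro sum.cong refl) (simp add: r_distr)
  also have "\<dots> = lam (a \<otimes> b0) * S" by (simp add: S_def sum_distrib_left)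
  finally have "(1 - lam (a \<otimes> b0)) * S = 0" by (simp add: algebra_simps)
  then show ?thesis using b0 unfolding S_def by simp
qed

end

context affset
begin

lemma Aff_carrier: "carrier (Aff R) = carrier R \<times> Units R" by (simp add: Aff_def)
lemma Aff_mult: "(b, u) \<otimes>\<^bsub>Aff R\<^esub> (b', u') = (b \<oplus> u \<otimes> b', u \<otimes> u')" by (simp add: Aff_def)
lemma Aff_one: "\<one>\<^bsub>Aff R\<^esub> = (\<zero>, \<one>)" by (simp add: Aff_def)

lemma units_fin: "finite (Units R)"
  using finR by (rule finite_subset[rotated]) (auto simp: Units_def)

lemma minus_zero_eq: "x \<in> carrier R \<Longrightarrow> y \<in> carrier R \<Longrightarrow> x \<ominus> y = \<zero> \<Longrightarrow> x = y"
proof -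
  assume x: "x \<in> carrier R" and y: "y \<in> carrier R" and e: "x \<ominus> y = \<zero>"
  have "x = (x \<ominus> y) \<oplus> y" using x y by algebra
  then show "x = y" using e y by simp
qed

lemma lower:
  assumes rho: "faithful_rep (Aff R) d \<rho>"
  shows "card (Units R) \<le> d"
proof -
  have carr: "\<And>x. x \<in> carrier R \<times> Units R \<Longrightarrow> \<rho> x \<in> carrier_mat d d"
    and hom: "\<And>x y. x \<in> carrier R \<times> Units R \<Longrightarrow> y \<in> carrier R \<times> Units R \<Longrightarrow> \<rho> (x \<otimes>\<^bsub>Aff R\<^esub> y) = \<rho> x * \<rho> y"
    and one: "\<rho> (\<zero>, \<one>) = 1\<^sub>m d"
    and inj: "inj_on \<rho> (carrier R \<times> Units R)"
    using rho unfolding faithful_rep_def Aff_carrier Aff_one by auto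
  define A where "A b = \<rho> (b, \<one>)" for b
  have ar: "addrep R A d"
  proof (unfold_locales)
    show "finite (carrier R)" by (rule finR)
    show "\<And>x. x \<in> carrier R \<Longrightarrow> A x \<in> carrier_mat d d" unfolding A_def using carr by simp
    show "\<And>x y. x \<in> carrier R \<Longrightarrow> y \<in> carrier R \<Longrightarrow> A (x \<oplus> y) = A x * A y"
      unfolding A_def using hom[of "(_, \<one>)" "(_, \<one>)"] by (simp add: Aff_mult)
    show "A \<zero> = 1\<^sub>m d" unfolding A_def by (rule one)
  qed
  interpret ar: addrep R A d by (rule ar)
  obtain m0 where m0: "m0 \<in> M" "m0 \<noteq> \<zero>" using M_nz by blast
  have "A m0 \<noteq> 1\<^sub>m d"
  proof
    assume "A m0 = 1\<^sub>m d"
    then have "\<rho> (m0, \<one>) = \<rho> (\<zero>, \<one>)" unfolding A_def using one by simp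
    then have "(m0, \<one>) = (\<zero>, \<one>)" using inj m0 M_sub unfolding inj_on_def by blast
    then show False using m0 by simp
  qed
  then obtain w lam where w: "w \<in> carrier_vec d" "w \<noteq> 0\<^sub>v d" and ev: "\<forall>x\<in>carrier R. A x *\<^sub>v w = lam x \<cdot>\<^sub>v w"
    and lsum: "(\<Sum>m\<in>M. lam m) = 0"
    using ar.char_exists[OF M_sub M_add M_neg m0(1)] by blast
  have lam: "ischar lam" unfolding ischar_def using ar.eig_hom[OF w ev] lsum by blast
  define U where "U u = \<rho> (\<zero>, u)" for u
  have Uc: "u \<in> Units R \<Longrightarrow> U u \<in> carrier_mat d d" for u unfolding U_def using carr by simp
  have AU: "A b * U u = U u * A (inv u \<otimes> b)" if b: "b \<in> carrier R" and u: "u \<in> Units R" for b u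
  proof -
    have "A b * U u = \<rho> (b, u)" unfolding A_def U_def using hom[of "(b, \<one>)" "(\<zero>, u)"] b u
      by (simp add: Aff_mult Units_closed)
    also have "\<dots> = U u * A (inv u \<otimes> b)" unfolding A_def U_def using hom[of "(\<zero>, u)" "(inv u \<otimes> b, \<one>)"] b u
      by (simp add: Aff_mult Units_closed m_assoc[symmetric] Units_r_inv)
    finally show ?thesis .
  qed
  have UU: "U (inv u) * U u = 1\<^sub>m d" if u: "u \<in> Units R" for u
    unfolding U_def using hom[of "(\<zero>, inv u)" "(\<zero>, u)"] u one
    by (simp add: Aff_mult Units_closed Units_l_inv)
  define wv where "wv u = U u *\<^sub>v w" for u
  have wvc: "wv u \<in> carrier_vec d" if "u \<in> Units R" for u
    unfolding wv_def by (rule carrier_vecI) (simp add: carrier_matD(1)[OF Uc[OF that]])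
  have wvnz: "wv u \<noteq> 0\<^sub>v d" if u: "u \<in> Units R" for u
  proof
    assume "wv u = 0\<^sub>v d"
    have "w = (U (inv u) * U u) *\<^sub>v w" using UU[OF u] w by simp
    also have "\<dots> = U (inv u) *\<^sub>v wv u" using Uc[OF u] Uc[OF Units_inv_Units[OF u]] w unfolding wv_def by simp
    also have "\<dots> = 0\<^sub>v d" using \<open>wv u = 0\<^sub>v d\<close> Uc[OF Units_inv_Units[OF u]] by simp
    finally show False using w by simp
  qed
  have wv_eig: "A b *\<^sub>v wv u = lam (inv u \<otimes> b) \<cdot>\<^sub>v wv u" if b: "b \<in> carrier R" and u: "u \<in> Units R" for b u
  proof -
    have Ab: "A b \<in> carrier_mat d d" using ar.A_carr b by simp
    have ib: "inv u \<otimes> b \<in> carrier R" using u b by simp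
    have Aib: "A (inv u \<otimes> b) \<in> carrier_mat d d" using ar.A_carr ib by simp
    have "A b *\<^sub>v wv u = (A b * U u) *\<^sub>v w" using Ab Uc[OF u] w unfolding wv_def by simp
    also have "\<dots> = (U u * A (inv u \<otimes> b)) *\<^sub>v w" using AU[OF b u] by simp
    also have "\<dots> = U u *\<^sub>v (A (inv u \<otimes> b) *\<^sub>v w)" using Aib Uc[OF u] w by simp
    also have "\<dots> = lam (inv u \<otimes> b) \<cdot>\<^sub>v wv u" using ev ib Uc[OF u] w unfolding wv_def by (simp add: mult_mat_vec)
    finally show ?thesis .
  qed
  define idx where "idx u = (SOME i. i < d \<and> wv u $ i \<noteq> 0)" for u
  have idx: "idx u < d" "wv u $ idx u \<noteq> 0" if u: "u \<in> Units R" for u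
  proof -
    have "\<exists>i. i < d \<and> wv u $ i \<noteq> 0" using vec_nz[OF wvc[OF u] wvnz[OF u]] by blast
    then have "idx u < d \<and> wv u $ idx u \<noteq> 0" unfolding idx_def by (rule someI_ex)
    then show "idx u < d" "wv u $ idx u \<noteq> 0" by simp_all
  qed
  define N :: complex where "N = of_nat (card (carrier R))"
  have N0: "N \<noteq> 0" unfolding N_def using finR by (auto simp: card_eq_0_iff)
  define rv where "rv u = vec d (\<lambda>j. (\<Sum>b\<in>carrier R. lam (\<ominus> (inv u \<otimes> b)) * A b $$ (idx u, j)) / (N * wv u $ idx u))" for u
  have key: "rv u \<bullet> wv t = (if u = t then 1 else 0)" if u: "u \<in> Units R" and t: "t \<in> Units R" for u t
  proof -
    define D where "D = N * wv u $ idx u"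
    have "rv u \<bullet> wv t = (\<Sum>j<d. (\<Sum>b\<in>carrier R. lam (\<ominus> (inv u \<otimes> b)) * A b $$ (idx u, j)) / D * wv t $ j)"
    proof -
      have "rv u \<bullet> wv t = (\<Sum>j\<in>{0..<d}. rv u $ j * wv t $ j)" using wvc[OF t] by (simp add: scalar_prod_def)
      also have "\<dots> = (\<Sum>j<d. (\<Sum>b\<in>carrier R. lam (\<ominus> (inv u \<otimes> b)) * A b $$ (idx u, j)) / D * wv t $ j)"
        unfolding lessThan_atLeast0 by (intro sum.cong refl) (simp add: rv_def D_def)
      finally show ?thesis .
    qed
    also have "\<dots> = (\<Sum>b\<in>carrier R. lam (\<ominus> (inv u \<otimes> b)) * (\<Sum>j<d. A b $$ (idx u, j) * wv t $ j)) / D"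
    proof -
      have "(\<Sum>j<d. (\<Sum>b\<in>carrier R. lam (\<ominus> (inv u \<otimes> b)) * A b $$ (idx u, j)) / D * wv t $ j)
          = (\<Sum>j<d. \<Sum>b\<in>carrier R. lam (\<ominus> (inv u \<otimes> b)) * A b $$ (idx u, j) * wv t $ j / D)"
        by (intro sum.cong refl) (simp add: sum_divide_distrib sum_distrib_right)
      also have "\<dots> = (\<Sum>b\<in>carrier R. \<Sum>j<d. lam (\<ominus> (inv u \<otimes> b)) * A b $$ (idx u, j) * wv t $ j / D)"
        by (rule sum.swap)
      also have "\<dots> = (\<Sum>b\<in>carrier R. lam (\<ominus> (inv u \<otimes> b)) * (\<Sum>j<d. A b $$ (idx u, j) * wv t $ j)) / D"
        by (simp add: sum_divide_distrib sum_distrib_left mult.assoc)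
      finally show ?thesis .
    qed
    also have "\<dots> = (\<Sum>b\<in>carrier R. lam (\<ominus> (inv u \<otimes> b)) * (A b *\<^sub>v wv t) $ idx u) / D"
    proof -
      have "(\<Sum>j<d. A b $$ (idx u, j) * wv t $ j) = (A b *\<^sub>v wv t) $ idx u" if b: "b \<in> carrier R" for b
        using mv_entry[OF ar.A_carr[OF b] wvc[OF t] idx(1)[OF u]] by simp
      then show ?thesis by (simp cong: sum.cong)
    qed
    also have "\<dots> = (\<Sum>b\<in>carrier R. lam (\<ominus> (inv u \<otimes> b)) * lam (inv t \<otimes> b)) * wv t $ idx u / D"
    proof -
      have "(\<Sum>b\<in>carrier R. lam (\<ominus> (inv u \<otimes> b)) * (A b *\<^sub>v wv t) $ idx u)
         = (\<Sum>b\<in>carrier R. lam (\<ominus> (inv u \<otimes> b)) * lam (inv t \<otimes> b) * wv t $ idx u)"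
      proof (rule sum.cong[OF refl])
        fix b assume b: "b \<in> carrier R"
        have "(A b *\<^sub>v wv t) $ idx u = lam (inv t \<otimes> b) * wv t $ idx u"
          using wv_eig[OF b t] idx[OF u] wvc[OF t] by simp
        then show "lam (\<ominus> (inv u \<otimes> b)) * (A b *\<^sub>v wv t) $ idx u = lam (\<ominus> (inv u \<otimes> b)) * lam (inv t \<otimes> b) * wv t $ idx u"
          by simp
      qed
      then show ?thesis by (simp add: sum_distrib_right)
    qed
    also have "(\<Sum>b\<in>carrier R. lam (\<ominus> (inv u \<otimes> b)) * lam (inv t \<otimes> b)) = (\<Sum>b\<in>carrier R. lam ((inv t \<ominus> inv u) \<otimes> b))"
    proof (rule sum.cong[OF refl])
      fix b assume b: "b \<in> carrier R"
      have iu: "inv u \<in> carrier R" and it: "inv t \<in> carrier R" using u t by auto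
      have "lam (\<ominus> (inv u \<otimes> b)) * lam (inv t \<otimes> b) = lam (\<ominus> (inv u \<otimes> b) \<oplus> inv t \<otimes> b)"
        using lam iu it b unfolding ischar_def by simp
      also have "\<ominus> (inv u \<otimes> b) \<oplus> inv t \<otimes> b = (inv t \<ominus> inv u) \<otimes> b" using iu it b by algebra
      finally show "lam (\<ominus> (inv u \<otimes> b)) * lam (inv t \<otimes> b) = lam ((inv t \<ominus> inv u) \<otimes> b)" .
    qed
    finally have e: "rv u \<bullet> wv t = (\<Sum>b\<in>carrier R. lam ((inv t \<ominus> inv u) \<otimes> b)) * wv t $ idx u / D" .
    show ?thesis
    proof (cases "u = t")
      case True
      have "(\<Sum>b\<in>carrier R. lam ((inv t \<ominus> inv u) \<otimes> b)) = (\<Sum>b\<in>carrier R. 1)"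
      proof (rule sum.cong[OF refl])
        fix b assume b: "b \<in> carrier R"
        have "inv t \<ominus> inv u = \<zero>" using True t by (simp add: a_minus_def r_neg)
        then show "lam ((inv t \<ominus> inv u) \<otimes> b) = 1" using lam b unfolding ischar_def by simp
      qed
      moreover have "(\<Sum>b\<in>carrier R. (1::complex)) = N" by (simp add: N_def)
      ultimately have "rv u \<bullet> wv t = N * wv u $ idx u / (N * wv u $ idx u)"
        using e True unfolding D_def by simp
      also have "\<dots> = 1" using N0 idx(2)[OF u] by simp
      finally show ?thesis using True by simp
    next
      case False
      have iu: "inv u \<in> carrier R" "inv t \<in> carrier R" using u t by (auto intro: Units_inv_closed)
      have ne: "inv t \<ominus> inv u \<noteq> \<zero>"
      proof
        assume h: "inv t \<ominus> inv u = \<zero>"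
        have "inv t = inv u" using minus_zero_eq[OF iu(2) iu(1) h] .
        then have "inv (inv t) = inv (inv u)" by (rule arg_cong)
        then have "t = u" using Units_inv_inv[OF u] Units_inv_inv[OF t] by (simp only:)
        then have "u = t" by (rule sym)
        with False show False by contradiction
      qed
      have cc: "inv t \<ominus> inv u \<in> carrier R" using minus_closed[OF iu(2) iu(1)] .
      have "(\<Sum>b\<in>carrier R. lam ((inv t \<ominus> inv u) \<otimes> b)) = 0"
        by (rule char_sum_zero[OF lam cc ne])
      then have "rv u \<bullet> wv t = 0 * wv t $ idx u / D" using e by simp
      then show ?thesis using False by simp
    qed
  qed
  define k where "k = card (Units R)"
  obtain e where e: "bij_betw e {..<k} (Units R)"
    using ex_bij_betw_nat_finite[OF units_fin] unfolding k_def atLeast0LessThan by blast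
  have eU: "i < k \<Longrightarrow> e i \<in> Units R" for i using e by (auto simp: bij_betw_def)
  define Phi where "Phi = mat k d (\<lambda>(i, j). rv (e i) $ j)"
  define Psi where "Psi = mat d k (\<lambda>(i, j). wv (e j) $ i)"
  have "Phi * Psi = 1\<^sub>m k"
  proof (rule eq_matI)
    fix i j assume "i < dim_row (1\<^sub>m k)" "j < dim_col (1\<^sub>m k)"
    then have ij: "i < k" "j < k" by auto
    have "(Phi * Psi) $$ (i, j) = (\<Sum>l<d. rv (e i) $ l * wv (e j) $ l)"
      using ij by (simp add: Phi_def Psi_def scalar_prod_def lessThan_atLeast0)
    also have "\<dots> = rv (e i) \<bullet> wv (e j)" using wvc[OF eU[OF ij(2)]] by (simp add: scalar_prod_def lessThan_atLeast0)
    also have "\<dots> = (if e i = e j then 1 else 0)" by (rule key[OF eU[OF ij(1)] eU[OF ij(2)]])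
    also have "\<dots> = 1\<^sub>m k $$ (i, j)" using e ij unfolding bij_betw_def inj_on_def by auto
    finally show "(Phi * Psi) $$ (i, j) = 1\<^sub>m k $$ (i, j)" .
  qed (auto simp: Phi_def Psi_def)
  then have "k \<le> d" by (intro rank_bound[of Phi k d Psi]) (auto simp: Phi_def Psi_def)
  then show ?thesis by (simp add: k_def)
qed

end

context affset
begin

lemma inv_prod_l: assumes u: "u \<in> Units R" and c: "c \<in> Units R" shows "inv (u \<otimes> c) \<otimes> u = inv c"
proof -
  have uc: "u \<otimes> c \<in> Units R" using u c by simp
  define x where "x = inv (u \<otimes> c) \<otimes> u"
  have xc: "x \<in> carrier R" using uc u unfolding x_def by (meson Units_closed Units_inv_closed m_closed)
  have "x \<otimes> c = inv (u \<otimes> c) \<otimes> (u \<otimes> c)"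
    unfolding x_def by (rule m_assoc[OF Units_inv_closed[OF uc] Units_closed[OF u] Units_closed[OF c]])
  also have "\<dots> = \<one>" by (rule Units_l_inv[OF uc])
  finally have xc1: "x \<otimes> c = \<one>" .
  have "x = x \<otimes> (c \<otimes> inv c)" using c xc by (simp add: Units_r_inv)
  also have "\<dots> = (x \<otimes> c) \<otimes> inv c"
    by (rule m_assoc[OF xc Units_closed[OF c] Units_inv_closed[OF c], symmetric])
  also have "\<dots> = inv c" using xc1 c by simp
  finally show ?thesis unfolding x_def .
qed

lemma exists_char: "\<exists>lam. ischar lam"
proof -
  define K where "K = card (carrier R)"
  obtain g where g: "bij_betw g {..<K} (carrier R)"
    using ex_bij_betw_nat_finite[OF finR] unfolding K_def atLeast0LessThan by blast
  have gc: "i < K \<Longrightarrow> g i \<in> carrier R" for i using g by (auto simp: bij_betw_def)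
  have ginj: "i < K \<Longrightarrow> j < K \<Longrightarrow> g i = g j \<longleftrightarrow> i = j" for i j using g unfolding bij_betw_def inj_on_def by auto
  define Ar where "Ar b = mat K K (\<lambda>(i, j). if g i = b \<oplus> g j then 1 else (0::complex))" for b
  have ar: "addrep R Ar K"
  proof (unfold_locales)
    show "finite (carrier R)" by (rule finR)
    show "\<And>x. x \<in> carrier R \<Longrightarrow> Ar x \<in> carrier_mat K K" by (simp add: Ar_def)
    show "Ar \<zero> = 1\<^sub>m K" unfolding Ar_def by (intro eq_matI) (auto simp: gc ginj)
    fix x y assume x: "x \<in> carrier R" and y: "y \<in> carrier R"
    show "Ar (x \<oplus> y) = Ar x * Ar y"
    proof (rule eq_matI)
      fix i j assume "i < dim_row (Ar x * Ar y)" "j < dim_col (Ar x * Ar y)"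
      then have ij: "i < K" "j < K" by (auto simp: Ar_def)
      define c where "c = y \<oplus> g j"
      have c: "c \<in> carrier R" using y gc ij unfolding c_def by simp
      define l0 where "l0 = inv_into {..<K} g c"
      have gl0: "g l0 = c" unfolding l0_def using g c by (simp add: bij_betw_def f_inv_into_f)
      have "(Ar x * Ar y) $$ (i, j) = (\<Sum>l<K. Ar x $$ (i, l) * Ar y $$ (l, j))"
        using ij by (intro mult_entry) (auto simp: Ar_def)
      also have "\<dots> = (\<Sum>l<K. if g l = c then (if g i = x \<oplus> g l then 1 else 0) else 0)"
        using ij by (intro sum.cong refl) (auto simp: Ar_def c_def)
      also have "\<dots> = (if g i = x \<oplus> g l0 then 1 else 0)"
        unfolding l0_def by (rule bij_delta_sum[OF g c])
      also have "\<dots> = Ar (x \<oplus> y) $$ (i, j)"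
        using ij x y gc gl0 by (simp add: Ar_def c_def a_assoc)
      finally show "Ar (x \<oplus> y) $$ (i, j) = (Ar x * Ar y) $$ (i, j)" by simp
    qed (auto simp: Ar_def)
  qed
  interpret ar: addrep R Ar K by (rule ar)
  obtain m0 where m0: "m0 \<in> M" "m0 \<noteq> \<zero>" using M_nz by blast
  have K0: "0 < K" unfolding K_def using finR by (auto simp: card_gt_0_iff)
  have "Ar m0 \<noteq> 1\<^sub>m K"
  proof
    assume h: "Ar m0 = 1\<^sub>m K"
    have "Ar m0 $$ (0, 0) = 1" using h K0 by simp
    then have e: "g 0 = m0 \<oplus> g 0" using K0 by (simp add: Ar_def split: if_splits)
    have m0c: "m0 \<in> carrier R" using m0 M_sub by auto
    have "m0 = (m0 \<oplus> g 0) \<ominus> g 0" using m0c gc[OF K0] by algebra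
    also have "\<dots> = \<zero>" using e[symmetric] gc[OF K0] by (simp add: a_minus_def r_neg)
    finally show False using m0 by simp
  qed
  then obtain w lam where w: "w \<in> carrier_vec K" "w \<noteq> 0\<^sub>v K" and ev: "\<forall>x\<in>carrier R. Ar x *\<^sub>v w = lam x \<cdot>\<^sub>v w"
    and lsum: "(\<Sum>m\<in>M. lam m) = 0"
    using ar.char_exists[OF M_sub M_add M_neg m0(1)] by blast
  have "ischar lam" unfolding ischar_def using ar.eig_hom[OF w ev] lsum by blast
  then show ?thesis by blast
qed

end

context affset
begin

lemma upper: "\<exists>\<rho>. faithful_rep (Aff R) (card (Units R)) \<rho>"
proof -
  note [simp] = Units_closed
  obtain lam where lam: "ischar lam" using exists_char by blast
  have hom: "\<And>x y. x \<in> carrier R \<Longrightarrow> y \<in> carrier R \<Longrightarrow> lam (x \<oplus> y) = lam x * lam y"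
    and l0: "lam \<zero> = 1" using lam unfolding ischar_def by auto
  define k where "k = card (Units R)"
  obtain e where e: "bij_betw e {..<k} (Units R)"
    using ex_bij_betw_nat_finite[OF units_fin] unfolding k_def atLeast0LessThan by blast
  have eU: "i < k \<Longrightarrow> e i \<in> Units R" for i using e by (auto simp: bij_betw_def)
  have einj: "i < k \<Longrightarrow> j < k \<Longrightarrow> e i = e j \<longleftrightarrow> i = j" for i j using e unfolding bij_betw_def inj_on_def by auto
  define ei where "ei s = inv_into {..<k} e s" for s
  have ei: "ei s < k \<and> e (ei s) = s" if "s \<in> Units R" for s
  proof -
    have "s \<in> e ` {..<k}" using e that by (simp add: bij_betw_def)
    then show ?thesis unfolding ei_def using inv_into_into[of s e "{..<k}"] f_inv_into_f[of s e "{..<k}"] by simp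
  qed
  define L where "L s b = lam (inv s \<otimes> b)" for s b
  define rho where "rho p = (case p of (b, u) \<Rightarrow> mat k k (\<lambda>(i, j). if e i = u \<otimes> e j then L (e i) b else 0))" for p
  have rho_idx: "rho (b, u) $$ (i, j) = (if e i = u \<otimes> e j then L (e i) b else 0)" if "i < k" "j < k" for b u i j
    using that by (simp add: rho_def)
  have rho_c: "rho p \<in> carrier_mat k k" for p by (cases p) (simp add: rho_def)
  have rho_d: "dim_row (rho p) = k" "dim_col (rho p) = k" for p using rho_c[of p] by auto
  have "faithful_rep (Aff R) k rho"
    unfolding faithful_rep_def Aff_carrier Aff_one
  proof (intro conjI ballI)
    fix x show "rho x \<in> carrier_mat k k" by (rule rho_c)
  next
    fix x y assume x: "x \<in> carrier R \<times> Units R" and y: "y \<in> carrier R \<times> Units R"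
    obtain b u where bu: "x = (b, u)" "b \<in> carrier R" "u \<in> Units R" using x by auto
    obtain b' u' where bu': "y = (b', u')" "b' \<in> carrier R" "u' \<in> Units R" using y by auto
    show "rho (x \<otimes>\<^bsub>Aff R\<^esub> y) = rho x * rho y"
      unfolding bu bu' Aff_mult
    proof (rule eq_matI)
      fix i j assume "i < dim_row (rho (b, u) * rho (b', u'))" "j < dim_col (rho (b, u) * rho (b', u'))"
      then have ij: "i < k" "j < k" by (simp_all add: rho_d)
      define c where "c = u' \<otimes> e j"
      have c: "c \<in> Units R" using bu'(3) eU[OF ij(2)] unfolding c_def by simp
      have "(rho (b, u) * rho (b', u')) $$ (i, j) = (\<Sum>l<k. rho (b, u) $$ (i, l) * rho (b', u') $$ (l, j))"
        using ij by (intro mult_entry[OF rho_c rho_c])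
      also have "\<dots> = (\<Sum>l<k. if e l = c then (if e i = u \<otimes> e l then L (e i) b else 0) * L (e l) b' else 0)"
        using ij by (intro sum.cong refl) (auto simp: rho_idx c_def)
      also have "\<dots> = (if e i = u \<otimes> e (ei c) then L (e i) b else 0) * L (e (ei c)) b'"
        unfolding ei_def by (rule bij_delta_sum[OF e c])
      also have "\<dots> = (if e i = u \<otimes> c then L (e i) b * L c b' else 0)"
        using ei[OF c] by simp
      also have "\<dots> = rho (b \<oplus> u \<otimes> b', u \<otimes> u') $$ (i, j)"
      proof (cases "e i = u \<otimes> c")
        case True
        have uu: "u \<otimes> u' \<otimes> e j = u \<otimes> c"
          unfolding c_def using bu'(3) bu(3) eU[OF ij(2)] by (meson Units_closed m_assoc)
        have iei: "inv (e i) \<in> carrier R" using eU[OF ij(1)] by simp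
        have uc: "u \<in> carrier R" using bu(3) by simp
        have "L (e i) (b \<oplus> u \<otimes> b') = lam (inv (e i) \<otimes> b \<oplus> (inv (e i) \<otimes> u) \<otimes> b')"
          unfolding L_def using iei uc bu(2) bu'(2) by (simp add: r_distr m_assoc)
        also have "\<dots> = L (e i) b * lam ((inv (e i) \<otimes> u) \<otimes> b')"
          unfolding L_def using iei uc bu(2) bu'(2) by (simp add: hom)
        also have "inv (e i) \<otimes> u = inv c" using True inv_prod_l[OF bu(3) c] by simp
        finally have "L (e i) (b \<oplus> u \<otimes> b') = L (e i) b * L c b'" by (simp add: L_def)
        then show ?thesis using True ij uu by (simp add: rho_idx)
      next
        case False
        have uu: "u \<otimes> u' \<otimes> e j = u \<otimes> c"
          unfolding c_def using bu'(3) bu(3) eU[OF ij(2)] by (meson Units_closed m_assoc)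
        then show ?thesis using False ij by (simp add: rho_idx)
      qed
      finally show "rho (b \<oplus> u \<otimes> b', u \<otimes> u') $$ (i, j) = (rho (b, u) * rho (b', u')) $$ (i, j)" by simp
    qed (simp_all add: rho_d)
  next
    show "rho (\<zero>, \<one>) = 1\<^sub>m k"
    proof (rule eq_matI)
      fix i j assume "i < dim_row (1\<^sub>m k)" "j < dim_col (1\<^sub>m k)"
      then have ij: "i < k" "j < k" by auto
      show "rho (\<zero>, \<one>) $$ (i, j) = 1\<^sub>m k $$ (i, j)"
        using ij eU[OF ij(1)] eU[OF ij(2)] einj[OF ij] by (simp add: rho_idx L_def l0)
    qed (simp_all add: rho_d)
  next
    show "inj_on rho (carrier R \<times> Units R)"
    proof (rule inj_onI)
      fix x y assume x: "x \<in> carrier R \<times> Units R" and y: "y \<in> carrier R \<times> Units R" and xy: "rho x = rho y"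
      obtain b u where bu: "x = (b, u)" "b \<in> carrier R" "u \<in> Units R" using x by auto
      obtain b' u' where bu': "y = (b', u')" "b' \<in> carrier R" "u' \<in> Units R" using y by auto
      have eq: "rho (b, u) $$ (i, j) = rho (b', u') $$ (i, j)" for i j using xy bu bu' by simp
      have one: "\<one> \<in> Units R" by simp
      define j1 where "j1 = ei \<one>"
      define i1 where "i1 = ei u"
      have j1: "j1 < k" "e j1 = \<one>" using ei[OF one] unfolding j1_def by auto
      have i1: "i1 < k" "e i1 = u" using ei[OF bu(3)] unfolding i1_def by auto
      have "rho (b, u) $$ (i1, j1) = L u b" using i1 j1 bu(3) by (simp add: rho_idx)
      moreover have "L u b \<noteq> 0" unfolding L_def using char_nz[OF lam] bu by simp
      ultimately have "rho (b', u') $$ (i1, j1) \<noteq> 0" using eq by metis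
      then have "e i1 = u' \<otimes> e j1" using i1 j1 by (auto simp: rho_idx split: if_splits)
      then have uu: "u = u'" using i1 j1 bu'(3) by simp
      have lb: "lam (s \<otimes> b) = lam (s \<otimes> b')" if s: "s \<in> Units R" for s
      proof -
        have isU: "inv s \<in> Units R" using s by simp
        have t: "inv u \<otimes> inv s \<in> Units R" using s bu(3) by simp
        define i2 where "i2 = ei (inv s)"
        define j2 where "j2 = ei (inv u \<otimes> inv s)"
        have i2: "i2 < k" "e i2 = inv s" using ei[OF isU] unfolding i2_def by auto
        have j2: "j2 < k" "e j2 = inv u \<otimes> inv s" using ei[OF t] unfolding j2_def by auto
        have ue: "u \<otimes> e j2 = inv s" using j2 bu(3) s by (simp add: m_assoc[symmetric] Units_r_inv)
        have "rho (b, u) $$ (i2, j2) = L (inv s) b" using i2 j2 ue by (simp add: rho_idx)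
        moreover have "rho (b', u') $$ (i2, j2) = L (inv s) b'" using i2 j2 ue uu by (simp add: rho_idx)
        ultimately have "L (inv s) b = L (inv s) b'" using eq by metis
        then show ?thesis unfolding L_def using s by simp
      qed
      define a where "a = b \<ominus> b'"
      have ac: "a \<in> carrier R" using bu(2) bu'(2) unfolding a_def by simp
      have "\<forall>s\<in>Units R. lam (a \<otimes> s) = 1"
      proof
        fix s assume s: "s \<in> Units R"
        have sc: "s \<in> carrier R" using s by simp
        have "a \<otimes> s = s \<otimes> b \<oplus> \<ominus> (s \<otimes> b')" unfolding a_def using sc bu(2) bu'(2) by algebra
        then have "lam (a \<otimes> s) = lam (s \<otimes> b) * lam (\<ominus> (s \<otimes> b'))" using sc bu(2) bu'(2) by (simp add: hom)
        also have "\<dots> = lam (\<ominus> (s \<otimes> b')) * lam (s \<otimes> b')" using lb[OF s] by simp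
        also have "\<dots> = 1" using char_neg[OF lam] sc bu'(2) by simp
        finally show "lam (a \<otimes> s) = 1" .
      qed
      then have "a = \<zero>" using prim_units[OF lam ac] by blast
      then have "b = b'" using minus_zero_eq bu(2) bu'(2) unfolding a_def by blast
      then show "x = y" using bu bu' uu by simp
    qed
  qed
  then show ?thesis unfolding k_def by blast
qed

theorem m_faithful_eq: "m_faithful (Aff R) = card (Units R)"
  unfolding m_faithful_def
proof (rule Least_equality)
  show "\<exists>\<rho>. faithful_rep (Aff R) (card (Units R)) \<rho>" by (rule upper)
next
  fix d assume "\<exists>\<rho>. faithful_rep (Aff R) d \<rho>"
  then show "card (Units R) \<le> d" using lower by blast
qed

end

context vf
begin

lemma affset_Rn:
  assumes n: "n \<ge> 1"
  shows "affset (Rn n) (cls n ` val_ideal v (n - 1))"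
proof -
  interpret cring "Rn n" by (rule cring_Quot)
  have I0: "\<And>x k. x \<in> val_ideal v k \<Longrightarrow> x \<in> val_ideal v 0" using I_sub by blast
  show ?thesis
  proof (unfold_locales)
    show "finite (carrier (Rn n))" using cardQ[of n] by (simp add: carrier_Quot)
    show "cls n ` val_ideal v (n - 1) \<subseteq> carrier (Rn n)" using I0 by (auto simp: carrier_Quot)
  next
    fix x y assume "x \<in> cls n ` val_ideal v (n - 1)" "y \<in> cls n ` val_ideal v (n - 1)"
    then obtain a b where ab: "a \<in> val_ideal v (n - 1)" "b \<in> val_ideal v (n - 1)" "x = cls n a" "y = cls n b" by auto
    have "x \<oplus>\<^bsub>Rn n\<^esub> y = cls n (a + b)" using ab I0 by (simp add: Quot_ops)
    then show "x \<oplus>\<^bsub>Rn n\<^esub> y \<in> cls n ` val_ideal v (n - 1)" using I_add[OF ab(1,2)] by simp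
  next
    fix x assume "x \<in> cls n ` val_ideal v (n - 1)"
    then obtain a where a: "a \<in> val_ideal v (n - 1)" "x = cls n a" by auto
    have "\<ominus>\<^bsub>Rn n\<^esub> x = cls n (- a)" using a I0 by (simp add: a_inv_Quot)
    then show "\<ominus>\<^bsub>Rn n\<^esub> x \<in> cls n ` val_ideal v (n - 1)" using I_neg[OF a(1)] by simp
  next
    have p: "upi ^ (n - 1) \<in> val_ideal v (n - 1)" by (simp add: mem_I upi_pow)
    have "cls n (upi ^ (n - 1)) \<noteq> cls n 0"
    proof
      assume "cls n (upi ^ (n - 1)) = cls n 0"
      then have "upi ^ (n - 1) \<in> val_ideal v n" by (simp add: cls_eq)
      then show False using upi_pow[of "n - 1"] n by (simp add: mem_I)
    qed
    then show "\<exists>m\<in>cls n ` val_ideal v (n - 1). m \<noteq> \<zero>\<^bsub>Rn n\<^esub>" using p by (auto simp: Quot_one_zero)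
  next
    fix a m assume a: "a \<in> carrier (Rn n)" "a \<noteq> \<zero>\<^bsub>Rn n\<^esub>" and m: "m \<in> cls n ` val_ideal v (n - 1)"
    obtain \<alpha> where al: "\<alpha> \<in> val_ideal v 0" "a = cls n \<alpha>" using a(1) by (auto simp: carrier_Quot)
    obtain \<mu> where mu: "\<mu> \<in> val_ideal v (n - 1)" "m = cls n \<mu>" using m by auto
    have "\<alpha> \<notin> val_ideal v n" using a(2) al by (auto simp: Quot_one_zero cls_eq)
    then have al2: "\<alpha> \<noteq> 0" "v \<alpha> < int n" "0 \<le> v \<alpha>" using al(1) by (auto simp: mem_I)
    show "\<exists>b\<in>carrier (Rn n). m = a \<otimes>\<^bsub>Rn n\<^esub> b"
    proof (cases "\<mu> = 0")
      case True
      have "a \<otimes>\<^bsub>Rn n\<^esub> cls n 0 = cls n 0" using al by (simp add: Quot_ops)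
      then show ?thesis using True mu by (intro bexI[of _ "cls n 0"]) (auto simp: carrier_Quot)
    next
      case False
      define \<beta> where "\<beta> = \<mu> / \<alpha>"
      have vmu: "int (n - 1) \<le> v \<mu>" using mu(1) False by (simp add: mem_I)
      have "v \<beta> = v \<mu> - v \<alpha>" unfolding \<beta>_def using False al2 by (simp add: vdiv)
      then have b0: "\<beta> \<in> val_ideal v 0" using vmu al2 n by (simp add: mem_I)
      have "a \<otimes>\<^bsub>Rn n\<^esub> cls n \<beta> = cls n \<mu>" using al b0 al2 by (simp add: Quot_ops \<beta>_def)
      then show ?thesis using mu b0 by (intro bexI[of _ "cls n \<beta>"]) (auto simp: carrier_Quot)
    qed
  next
    fix r assume r: "r \<in> carrier (Rn n)" "r \<notin> Units (Rn n)"
    obtain \<rho> where rho: "\<rho> \<in> val_ideal v 0" "r = cls n \<rho>" using r(1) by (auto simp: carrier_Quot)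
    have r1: "\<rho> \<in> val_ideal v 1" using units_Quot[OF n rho(1)] r rho by simp
    have "r \<ominus>\<^bsub>Rn n\<^esub> \<one>\<^bsub>Rn n\<^esub> = cls n \<rho> \<oplus>\<^bsub>Rn n\<^esub> cls n (- 1)"
      using rho by (simp add: a_minus_def Quot_one_zero a_inv_Quot)
    also have "\<dots> = cls n (\<rho> - 1)" using rho I_neg[OF one_I0] by (simp add: Quot_ops)
    finally have e: "r \<ominus>\<^bsub>Rn n\<^esub> \<one>\<^bsub>Rn n\<^esub> = cls n (\<rho> - 1)" .
    have c0: "\<rho> - 1 \<in> val_ideal v 0" using I_diff[OF rho(1) one_I0] .
    have c1: "\<rho> - 1 \<notin> val_ideal v 1"
    proof
      assume "\<rho> - 1 \<in> val_ideal v 1"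
      then have "\<rho> - (\<rho> - 1) \<in> val_ideal v 1" using I_diff[OF r1] by blast
      then show False using one_not_I1 by simp
    qed
    show "r \<ominus>\<^bsub>Rn n\<^esub> \<one>\<^bsub>Rn n\<^esub> \<in> Units (Rn n)" using e units_Quot[OF n c0] c1 by simp
  qed
qed

end

theorem theorem1p5:
  fixes v :: "'a::field \<Rightarrow> int" and n :: nat
  assumes "nonarch_local_field v" and "n \<ge> 1"
  shows "m_faithful (Aff (val_ring v Quot val_ideal v n))
           = residue_card v ^ n - residue_card v ^ (n - 1)"
proof -
  interpret vf v by (unfold_locales) (rule assms(1))
  interpret affset "val_ring v Quot val_ideal v n" "cls n ` val_ideal v (n - 1)"
    by (rule affset_Rn[OF assms(2)])
  show ?thesis using m_faithful_eq card_units[OF assms(2)] by simp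
qed

end
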